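(* Let $n\ge1$, $m,m'\ge0$. The subring of $S_n$-invariants of $\mathbb{C}[X_{n\times m};\Theta_{n\times m'}]$ is generated as a $\mathbb{C}$-algebra by the power sum generators $p_S$, where $S$ runs over all multisets over $[m]\cup[\overline{m'}]$ with no repeated barred entries and $|S|\le n$.
   Context: $\mathbb{C}[X_{n\times m};\Theta_{n\times m'}]$ is the associative $\mathbb{C}$-algebra generated by $x_{rk}$ ($1\le r\le n$, $1\le k\le m$) and $\theta_{ri}$ ($1\le r\le n$, $1\le i\le m'$) with: the $x_{rk}$ commute with each other and with all $\theta_{si}$; $\theta_{ri}\theta_{sj}=-\theta_{sj}\theta_{ri}$ for $(r,i)\ne(s,j)$; $\theta_{ri}^2=0$. $S_n$ acts by algebra automorphisms via $\sigma(x_{rk})=x_{\sigma(r)k}$, $\sigma(\theta_{ri})=\theta_{\sigma(r)i}$. Multisets are over $\{1,\dots,m\}\cup\{\bar1,\dots,\overline{m'}\}$ (entries $\bar j$ barred). For $S=\{\!\{1^{a_1},\dots,m^{a_m},\bar s_1,\dots,\bar s_k\}\!\}$ with $s_1<\dots<s_k$ distinct, $|S|=a_1+\dots+a_m+k$ and $p_S=\sum_{r=1}^n x_{r1}^{a_1}\cdots x_{rm}^{a_m}\theta_{rs_1}\cdots\theta_{rs_k}$ (so $p_\emptyset=n$). *)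

theory Defs
  imports Complex_Main "HOL-Library.Multiset" "HOL-Library.Product_Lexorder"
    "HOL-Combinatorics.Permutations"
begin

(* The algebra C[X_{n x m}; Theta_{n x m'}], indices 1-based as in the paper.
   A monomial is x^e * theta_A, where e :: (r,k) => exponent and A is a finite set
   of indices (r,i); theta_A denotes the product of the theta_{ri}, (r,i) in A,
   taken in increasing lexicographic order of (r,i). *)

type_synonym mono = "((nat \<times> nat) \<Rightarrow> nat) \<times> (nat \<times> nat) set"
type_synonym salg = "mono \<Rightarrow> complex"

definition valid_mono :: "nat \<Rightarrow> nat \<Rightarrow> nat \<Rightarrow> mono \<Rightarrow> bool" where
  "valid_mono n m m' \<mu> \<longleftrightarrow>
     (\<forall>r k. fst \<mu> (r, k) \<noteq> 0 \<longrightarrow> r \<in> {1..n} \<and> k \<in> {1..m}) \<and>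
     snd \<mu> \<subseteq> {1..n} \<times> {1..m'}"

definition supp :: "salg \<Rightarrow> mono set" where
  "supp f = {\<mu>. f \<mu> \<noteq> 0}"

definition carrier_alg :: "nat \<Rightarrow> nat \<Rightarrow> nat \<Rightarrow> salg set" where
  "carrier_alg n m m' = {f. finite (supp f) \<and> (\<forall>\<mu>\<in>supp f. valid_mono n m m' \<mu>)}"

(* theta_A * theta_B = theta_sign A B * theta_{A \<union> B} for disjoint A, B *)
definition theta_sign :: "(nat \<times> nat) set \<Rightarrow> (nat \<times> nat) set \<Rightarrow> complex" where
  "theta_sign A B = (-1) ^ card {(a, b). a \<in> A \<and> b \<in> B \<and> b < a}"

definition mono_mul :: "mono \<Rightarrow> mono \<Rightarrow> mono" where
  "mono_mul \<alpha> \<beta> = ((\<lambda>p. fst \<alpha> p + fst \<beta> p), snd \<alpha> \<union> snd \<beta>)"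

definition alg_mul :: "salg \<Rightarrow> salg \<Rightarrow> salg" where
  "alg_mul f g = (\<lambda>\<mu>. \<Sum>\<alpha>\<in>supp f. \<Sum>\<beta>\<in>supp g.
      if snd \<alpha> \<inter> snd \<beta> = {} \<and> mono_mul \<alpha> \<beta> = \<mu>
      then theta_sign (snd \<alpha>) (snd \<beta>) * f \<alpha> * g \<beta> else 0)"

definition alg_add :: "salg \<Rightarrow> salg \<Rightarrow> salg" where
  "alg_add f g = (\<lambda>\<mu>. f \<mu> + g \<mu>)"

definition alg_const :: "complex \<Rightarrow> salg" where
  "alg_const c = (\<lambda>\<mu>. if \<mu> = ((\<lambda>_. 0), {}) then c else 0)"

inductive_set gen_subalg :: "salg set \<Rightarrow> salg set" for G where
  const: "alg_const c \<in> gen_subalg G"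
| gen: "g \<in> G \<Longrightarrow> g \<in> gen_subalg G"
| add: "f \<in> gen_subalg G \<Longrightarrow> g \<in> gen_subalg G \<Longrightarrow> alg_add f g \<in> gen_subalg G"
| mul: "f \<in> gen_subalg G \<Longrightarrow> g \<in> gen_subalg G \<Longrightarrow> alg_mul f g \<in> gen_subalg G"

(* S_n action: sigma(x_{rk}) = x_{sigma(r) k}, sigma(theta_{ri}) = theta_{sigma(r) i} *)
definition mono_act :: "(nat \<Rightarrow> nat) \<Rightarrow> mono \<Rightarrow> mono" where
  "mono_act \<sigma> \<alpha> = ((\<lambda>(r, k). fst \<alpha> (inv \<sigma> r, k)), (\<lambda>(r, i). (\<sigma> r, i)) ` snd \<alpha>)"

(* sign from reordering the product of theta_{sigma(r) i}, (r,i) in A ascending *)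
definition perm_sign :: "(nat \<Rightarrow> nat) \<Rightarrow> (nat \<times> nat) set \<Rightarrow> complex" where
  "perm_sign \<sigma> A = (-1) ^ card {(a, b). a \<in> A \<and> b \<in> A \<and> a < b \<and>
       (\<sigma> (fst b), snd b) < (\<sigma> (fst a), snd a)}"

definition alg_act :: "(nat \<Rightarrow> nat) \<Rightarrow> salg \<Rightarrow> salg" where
  "alg_act \<sigma> f = (\<lambda>\<mu>. \<Sum>\<alpha>\<in>supp f.
      if mono_act \<sigma> \<alpha> = \<mu> then perm_sign \<sigma> (snd \<alpha>) * f \<alpha> else 0)"

(* Multisets over [m] \<union> [bar m']: Inl k stands for k, Inr j for bar j *)
definition row_mono :: "nat \<Rightarrow> (nat + nat) multiset \<Rightarrow> mono" where
  "row_mono r S = ((\<lambda>(r', k). if r' = r then count S (Inl k) else 0),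
                   {(r, i) | i. Inr i \<in># S})"

(* p_S = \<Sum>_{r=1..n} x_{r1}^{a_1}...x_{rm}^{a_m} theta_{r s_1}...theta_{r s_k} *)
definition psum :: "nat \<Rightarrow> (nat + nat) multiset \<Rightarrow> salg" where
  "psum n S = (\<lambda>\<mu>. of_nat (card {r \<in> {1..n}. row_mono r S = \<mu>}))"

definition admissible_ms :: "nat \<Rightarrow> nat \<Rightarrow> nat \<Rightarrow> (nat + nat) multiset \<Rightarrow> bool" where
  "admissible_ms n m m' S \<longleftrightarrow>
     set_mset S \<subseteq> Inl ` {1..m} \<union> Inr ` {1..m'} \<and>
     (\<forall>j. count S (Inr j) \<le> 1) \<and> size S \<le> n"

end

theory Submission
  imports Defs "HOL-Library.Function_Algebras"
begin


lemma sum_fun_apply: "(sum F I) x = sum (\<lambda>i. F i x) I"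
  by (induction I rule: infinite_finite_induct) auto

lemma alg_add_eq: "alg_add f g = f + g"
  by (auto simp: alg_add_def)

definition fin :: "salg \<Rightarrow> bool" where "fin f \<longleftrightarrow> finite (supp f)"
definition mon :: "mono \<Rightarrow> salg" where "mon \<mu> = (\<lambda>\<nu>. if \<nu> = \<mu> then 1 else 0)"
definition sc :: "complex \<Rightarrow> salg \<Rightarrow> salg" where "sc c f = (\<lambda>\<nu>. c * f \<nu>)"

lemma supp_iff: "\<mu> \<in> supp f \<longleftrightarrow> f \<mu> \<noteq> 0" by (simp add: supp_def)

lemma alg_mul_eq:
  assumes "finite A" "finite B" "supp f \<subseteq> A" "supp g \<subseteq> B"
  shows "alg_mul f g \<mu> = (\<Sum>\<alpha>\<in>A. \<Sum>\<beta>\<in>B.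
      if snd \<alpha> \<inter> snd \<beta> = {} \<and> mono_mul \<alpha> \<beta> = \<mu>
      then theta_sign (snd \<alpha>) (snd \<beta>) * f \<alpha> * g \<beta> else 0)"
proof -
  define F where "F = (\<lambda>\<alpha> \<beta>. if snd \<alpha> \<inter> snd \<beta> = {} \<and> mono_mul \<alpha> \<beta> = \<mu>
      then theta_sign (snd \<alpha>) (snd \<beta>) * f \<alpha> * g \<beta> else 0)"
  have fs: "finite (supp f)" "finite (supp g)" using assms finite_subset by auto
  have "alg_mul f g \<mu> = (\<Sum>\<alpha>\<in>supp f. \<Sum>\<beta>\<in>supp g. F \<alpha> \<beta>)"
    by (simp add: alg_mul_def F_def)
  also have "\<dots> = (\<Sum>\<alpha>\<in>A. \<Sum>\<beta>\<in>supp g. F \<alpha> \<beta>)"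
    by (rule sum.mono_neutral_left) (use assms in \<open>auto simp: F_def supp_iff intro!: sum.neutral\<close>)
  also have "\<dots> = (\<Sum>\<alpha>\<in>A. \<Sum>\<beta>\<in>B. F \<alpha> \<beta>)"
    by (rule sum.cong[OF refl], rule sum.mono_neutral_left) (use assms in \<open>auto simp: F_def supp_iff\<close>)
  finally show ?thesis by (simp add: F_def)
qed

lemma alg_act_eq:
  assumes "finite A" "supp f \<subseteq> A"
  shows "alg_act \<sigma> f \<mu> = (\<Sum>\<alpha>\<in>A. if mono_act \<sigma> \<alpha> = \<mu> then perm_sign \<sigma> (snd \<alpha>) * f \<alpha> else 0)"
  unfolding alg_act_def
  by (rule sum.mono_neutral_left) (use assms in \<open>auto simp: supp_iff\<close>)

lemma supp_add: "supp (f + g) \<subseteq> supp f \<union> supp g" by (auto simp: supp_def)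
lemma supp_sc: "supp (sc c f) \<subseteq> supp f" by (auto simp: supp_def sc_def)
lemma supp_mon: "supp (mon \<mu>) = {\<mu>}" by (auto simp: supp_def mon_def)
lemma supp_zero: "supp 0 = {}" by (auto simp: supp_def)

lemma supp_alg_mul: "supp (alg_mul f g) \<subseteq> (\<lambda>(\<alpha>,\<beta>). mono_mul \<alpha> \<beta>) ` (supp f \<times> supp g)"
proof
  fix \<mu> assume "\<mu> \<in> supp (alg_mul f g)"
  then have "alg_mul f g \<mu> \<noteq> 0" by (simp add: supp_iff)
  have "\<exists>\<alpha>\<in>supp f. \<exists>\<beta>\<in>supp g. mono_mul \<alpha> \<beta> = \<mu>"
  proof (rule ccontr)
    assume "\<not> ?thesis"
    then have "alg_mul f g \<mu> = 0" unfolding alg_mul_def by (auto intro!: sum.neutral)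
    then show False using \<open>alg_mul f g \<mu> \<noteq> 0\<close> by simp
  qed
  then obtain \<alpha> \<beta> where "\<alpha> \<in> supp f" "\<beta> \<in> supp g" "mono_mul \<alpha> \<beta> = \<mu>" by blast
  then show "\<mu> \<in> (\<lambda>(\<alpha>,\<beta>). mono_mul \<alpha> \<beta>) ` (supp f \<times> supp g)" by force
qed

lemma supp_alg_act: "supp (alg_act \<sigma> f) \<subseteq> mono_act \<sigma> ` supp f"
proof
  fix \<mu> assume "\<mu> \<in> supp (alg_act \<sigma> f)"
  then have "alg_act \<sigma> f \<mu> \<noteq> 0" by (simp add: supp_iff)
  have "\<exists>\<alpha>\<in>supp f. mono_act \<sigma> \<alpha> = \<mu>"
  proof (rule ccontr)
    assume "\<not> ?thesis"
    then have "alg_act \<sigma> f \<mu> = 0" unfolding alg_act_def by (auto intro!: sum.neutral)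
    then show False using \<open>alg_act \<sigma> f \<mu> \<noteq> 0\<close> by simp
  qed
  then obtain \<alpha> where "\<alpha> \<in> supp f" "mono_act \<sigma> \<alpha> = \<mu>" by blast
  then show "\<mu> \<in> mono_act \<sigma> ` supp f" by force
qed

lemma fin_add[intro]: "fin f \<Longrightarrow> fin g \<Longrightarrow> fin (f + g)"
  unfolding fin_def by (meson finite_UnI finite_subset supp_add)
lemma fin_sc[intro]: "fin f \<Longrightarrow> fin (sc c f)"
  unfolding fin_def by (meson finite_subset supp_sc)
lemma fin_zero[intro]: "fin 0" unfolding fin_def by (simp add: supp_zero)
lemma fin_mon[intro]: "fin (mon \<mu>)" unfolding fin_def by (simp add: supp_mon)
lemma fin_sum[intro]: "(\<And>i. i \<in> I \<Longrightarrow> fin (F i)) \<Longrightarrow> fin (sum F I)"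
  by (induction I rule: infinite_finite_induct) auto
lemma fin_alg_mul[intro]: "fin f \<Longrightarrow> fin g \<Longrightarrow> fin (alg_mul f g)"
  unfolding fin_def by (rule finite_subset[OF supp_alg_mul]) auto
lemma fin_alg_act[intro]: "fin f \<Longrightarrow> fin (alg_act \<sigma> f)"
  unfolding fin_def by (meson finite_imageI finite_subset supp_alg_act)


definition KK :: "mono \<Rightarrow> mono \<Rightarrow> mono \<Rightarrow> complex" where
  "KK \<mu> \<alpha> \<beta> = (if snd \<alpha> \<inter> snd \<beta> = {} \<and> mono_mul \<alpha> \<beta> = \<mu> then theta_sign (snd \<alpha>) (snd \<beta>) else 0)"

lemma alg_mul_KK:
  assumes "finite A" "finite B" "supp f \<subseteq> A" "supp g \<subseteq> B"
  shows "alg_mul f g \<mu> = (\<Sum>\<alpha>\<in>A. \<Sum>\<beta>\<in>B. KK \<mu> \<alpha> \<beta> * f \<alpha> * g \<beta>)"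
  unfolding alg_mul_eq[OF assms] KK_def by (intro sum.cong refl) auto

lemma alg_mul_add_left:
  assumes "fin f1" "fin f2" "fin g"
  shows "alg_mul (f1 + f2) g = alg_mul f1 g + alg_mul f2 g"
proof
  fix \<mu>
  let ?A = "supp f1 \<union> supp f2"
  have fa: "finite ?A" "finite (supp g)" using assms by (auto simp: fin_def)
  have s: "supp (f1 + f2) \<subseteq> ?A" "supp f1 \<subseteq> ?A" "supp f2 \<subseteq> ?A" using supp_add by auto
  show "alg_mul (f1 + f2) g \<mu> = (alg_mul f1 g + alg_mul f2 g) \<mu>"
    unfolding plus_fun_apply alg_mul_KK[OF fa s(1) order.refl] alg_mul_KK[OF fa s(2) order.refl]
      alg_mul_KK[OF fa s(3) order.refl] sum.distrib[symmetric]
    by (simp add: algebra_simps)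
qed

lemma alg_mul_add_right:
  assumes "fin f" "fin g1" "fin g2"
  shows "alg_mul f (g1 + g2) = alg_mul f g1 + alg_mul f g2"
proof
  fix \<mu>
  let ?B = "supp g1 \<union> supp g2"
  have fa: "finite (supp f)" "finite ?B" using assms by (auto simp: fin_def)
  have s: "supp (g1 + g2) \<subseteq> ?B" "supp g1 \<subseteq> ?B" "supp g2 \<subseteq> ?B" using supp_add by auto
  show "alg_mul f (g1 + g2) \<mu> = (alg_mul f g1 + alg_mul f g2) \<mu>"
    unfolding plus_fun_apply alg_mul_KK[OF fa order.refl s(1)] alg_mul_KK[OF fa order.refl s(2)]
      alg_mul_KK[OF fa order.refl s(3)] sum.distrib[symmetric]
    by (simp add: algebra_simps)
qed

lemma alg_mul_sc_left:
  assumes "fin f" "fin g"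
  shows "alg_mul (sc c f) g = sc c (alg_mul f g)"
proof
  fix \<mu>
  have fa: "finite (supp f)" "finite (supp g)" using assms by (auto simp: fin_def)
  show "alg_mul (sc c f) g \<mu> = sc c (alg_mul f g) \<mu>"
    unfolding alg_mul_KK[OF fa supp_sc order.refl] alg_mul_KK[OF fa order.refl order.refl]
    by (simp add: sc_def sum_distrib_left algebra_simps)
qed

lemma alg_mul_sc_right:
  assumes "fin f" "fin g"
  shows "alg_mul f (sc c g) = sc c (alg_mul f g)"
proof
  fix \<mu>
  have fa: "finite (supp f)" "finite (supp g)" using assms by (auto simp: fin_def)
  show "alg_mul f (sc c g) \<mu> = sc c (alg_mul f g) \<mu>"
    unfolding alg_mul_KK[OF fa order.refl supp_sc] alg_mul_KK[OF fa order.refl order.refl]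
    by (simp add: sc_def sum_distrib_left algebra_simps)
qed

lemma alg_mul_zero_left: "alg_mul 0 g = 0"
  by (auto simp: alg_mul_def supp_zero)
lemma alg_mul_zero_right: "alg_mul f 0 = 0"
  by (auto simp: alg_mul_def supp_zero)

lemma alg_mul_sum_left:
  assumes "\<And>i. i \<in> I \<Longrightarrow> fin (F i)" "fin g"
  shows "alg_mul (sum F I) g = (\<Sum>i\<in>I. alg_mul (F i) g)"
  using assms
proof (induction I rule: infinite_finite_induct)
  case (insert x F')
  have "fin (sum F F')" by (rule fin_sum) (use insert in auto)
  have "alg_mul (sum F (insert x F')) g = alg_mul (F x + sum F F') g"
    by (simp only: sum.insert[OF insert(1,2)])
  also have "\<dots> = alg_mul (F x) g + alg_mul (sum F F') g"
    by (rule alg_mul_add_left) (use insert \<open>fin (sum F F')\<close> in auto)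
  also have "\<dots> = alg_mul (F x) g + (\<Sum>i\<in>F'. alg_mul (F i) g)" using insert by simp
  finally show ?case by (simp only: sum.insert[OF insert(1,2)])
qed (auto simp: alg_mul_zero_left alg_mul_add_left)

lemma alg_mul_sum_right:
  assumes "\<And>i. i \<in> I \<Longrightarrow> fin (F i)" "fin f"
  shows "alg_mul f (sum F I) = (\<Sum>i\<in>I. alg_mul f (F i))"
  using assms
proof (induction I rule: infinite_finite_induct)
  case (insert x F')
  have "fin (sum F F')" by (rule fin_sum) (use insert in auto)
  have "alg_mul f (sum F (insert x F')) = alg_mul f (F x + sum F F')"
    by (simp only: sum.insert[OF insert(1,2)])
  also have "\<dots> = alg_mul f (F x) + alg_mul f (sum F F')"
    by (rule alg_mul_add_right) (use insert \<open>fin (sum F F')\<close> in auto)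
  also have "\<dots> = alg_mul f (F x) + (\<Sum>i\<in>F'. alg_mul f (F i))" using insert by simp
  finally show ?case by (simp only: sum.insert[OF insert(1,2)])
qed (auto simp: alg_mul_zero_right alg_mul_add_right)

definition AK :: "(nat \<Rightarrow> nat) \<Rightarrow> mono \<Rightarrow> mono \<Rightarrow> complex" where
  "AK \<sigma> \<mu> \<alpha> = (if mono_act \<sigma> \<alpha> = \<mu> then perm_sign \<sigma> (snd \<alpha>) else 0)"

lemma alg_act_AK:
  assumes "finite A" "supp f \<subseteq> A"
  shows "alg_act \<sigma> f \<mu> = (\<Sum>\<alpha>\<in>A. AK \<sigma> \<mu> \<alpha> * f \<alpha>)"
  unfolding alg_act_eq[OF assms] AK_def by (intro sum.cong refl) auto

lemma alg_act_add:
  assumes "fin f1" "fin f2"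
  shows "alg_act \<sigma> (f1 + f2) = alg_act \<sigma> f1 + alg_act \<sigma> f2"
proof
  fix \<mu>
  let ?A = "supp f1 \<union> supp f2"
  have fa: "finite ?A" using assms by (auto simp: fin_def)
  have s: "supp (f1 + f2) \<subseteq> ?A" "supp f1 \<subseteq> ?A" "supp f2 \<subseteq> ?A" using supp_add by auto
  show "alg_act \<sigma> (f1 + f2) \<mu> = (alg_act \<sigma> f1 + alg_act \<sigma> f2) \<mu>"
    unfolding plus_fun_apply alg_act_AK[OF fa s(1)] alg_act_AK[OF fa s(2)] alg_act_AK[OF fa s(3)]
      sum.distrib[symmetric]
    by (simp add: algebra_simps)
qed

lemma alg_act_sc:
  assumes "fin f"
  shows "alg_act \<sigma> (sc c f) = sc c (alg_act \<sigma> f)"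
proof
  fix \<mu>
  have fa: "finite (supp f)" using assms by (auto simp: fin_def)
  show "alg_act \<sigma> (sc c f) \<mu> = sc c (alg_act \<sigma> f) \<mu>"
    unfolding alg_act_AK[OF fa supp_sc] alg_act_AK[OF fa order.refl]
    by (simp add: sc_def sum_distrib_left algebra_simps)
qed

lemma alg_act_zero: "alg_act \<sigma> 0 = 0"
  by (auto simp: alg_act_def supp_zero)

lemma alg_act_sum:
  assumes "\<And>i. i \<in> I \<Longrightarrow> fin (F i)"
  shows "alg_act \<sigma> (sum F I) = (\<Sum>i\<in>I. alg_act \<sigma> (F i))"
  using assms
proof (induction I rule: infinite_finite_induct)
  case (insert x F')
  have "fin (sum F F')" by (rule fin_sum) (use insert in auto)
  have "alg_act \<sigma> (sum F (insert x F')) = alg_act \<sigma> (F x + sum F F')"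
    by (simp only: sum.insert[OF insert(1,2)])
  also have "\<dots> = alg_act \<sigma> (F x) + alg_act \<sigma> (sum F F')"
    by (rule alg_act_add) (use insert \<open>fin (sum F F')\<close> in auto)
  also have "\<dots> = alg_act \<sigma> (F x) + (\<Sum>i\<in>F'. alg_act \<sigma> (F i))" using insert by simp
  finally show ?case by (simp only: sum.insert[OF insert(1,2)])
qed (auto simp: alg_act_zero alg_act_add)

lemma sc_sum: "sc c (sum F I) = (\<Sum>i\<in>I. sc c (F i))"
  by (auto simp: sc_def sum_fun_apply sum_distrib_left)
lemma sc_add: "sc c (f + g) = sc c f + sc c g"
  by (auto simp: sc_def algebra_simps)
lemma sc_sc: "sc a (sc b f) = sc (a * b) f"
  by (auto simp: sc_def)
lemma sc_one[simp]: "sc 1 f = f"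
  by (auto simp: sc_def)
lemma sc_zero[simp]: "sc 0 f = 0" "sc c 0 = 0"
  by (auto simp: sc_def)
lemma sc_plus_scalar: "sc (a + b) f = sc a f + sc b f"
  by (auto simp: sc_def algebra_simps)
lemma sc_minus: "sc c (f - g) = sc c f - sc c g"
  by (auto simp: sc_def algebra_simps)

lemma alg_mul_single:
  assumes "supp f \<subseteq> {\<alpha>}" "supp g \<subseteq> {\<beta>}"
  shows "alg_mul f g \<mu> = KK \<mu> \<alpha> \<beta> * f \<alpha> * g \<beta>"
  using alg_mul_KK[OF _ _ assms] by simp

lemma alg_act_single:
  assumes "supp f \<subseteq> {\<alpha>}"
  shows "alg_act \<sigma> f \<mu> = AK \<sigma> \<mu> \<alpha> * f \<alpha>"
  using alg_act_AK[OF _ assms] by simp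

lemma alg_mul_mon:
  "alg_mul (sc a (mon \<alpha>)) (sc b (mon \<beta>)) =
    (if snd \<alpha> \<inter> snd \<beta> = {} then sc (a * b * theta_sign (snd \<alpha>) (snd \<beta>)) (mon (mono_mul \<alpha> \<beta>)) else 0)"
proof
  fix \<mu>
  have s: "supp (sc a (mon \<alpha>)) \<subseteq> {\<alpha>}" "supp (sc b (mon \<beta>)) \<subseteq> {\<beta>}"
    using supp_sc supp_mon by metis+
  show "alg_mul (sc a (mon \<alpha>)) (sc b (mon \<beta>)) \<mu> = (if snd \<alpha> \<inter> snd \<beta> = {} then sc (a * b * theta_sign (snd \<alpha>) (snd \<beta>)) (mon (mono_mul \<alpha> \<beta>)) else 0) \<mu>"
    unfolding alg_mul_single[OF s] by (auto simp: KK_def sc_def mon_def)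
qed

lemma alg_act_mon:
  "alg_act \<sigma> (sc a (mon \<alpha>)) = sc (a * perm_sign \<sigma> (snd \<alpha>)) (mon (mono_act \<sigma> \<alpha>))"
proof
  fix \<mu>
  have s: "supp (sc a (mon \<alpha>)) \<subseteq> {\<alpha>}"
    using supp_sc supp_mon by metis+
  show "alg_act \<sigma> (sc a (mon \<alpha>)) \<mu> = sc (a * perm_sign \<sigma> (snd \<alpha>)) (mon (mono_act \<sigma> \<alpha>)) \<mu>"
    unfolding alg_act_single[OF s] by (auto simp: AK_def sc_def mon_def)
qed

lemma fin_expand:
  assumes "fin f"
  shows "f = (\<Sum>\<alpha>\<in>supp f. sc (f \<alpha>) (mon \<alpha>))"
proof
  fix \<mu>
  have fa: "finite (supp f)" using assms by (simp add: fin_def)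
  show "f \<mu> = (\<Sum>\<alpha>\<in>supp f. sc (f \<alpha>) (mon \<alpha>)) \<mu>"
  proof (cases "\<mu> \<in> supp f")
    case True
    have "(\<Sum>\<alpha>\<in>supp f. sc (f \<alpha>) (mon \<alpha>)) \<mu> = (\<Sum>\<alpha>\<in>supp f. if \<mu> = \<alpha> then f \<alpha> else 0)"
      unfolding sum_fun_apply by (intro sum.cong refl) (auto simp: sc_def mon_def)
    then show ?thesis using True by (simp add: sum.delta'[OF fa] supp_iff)
  next
    case False
    then show ?thesis unfolding sum_fun_apply
      by (auto simp: sc_def mon_def supp_iff intro!: sum.neutral)
  qed
qed



fun ninv :: "('a::linorder) list \<Rightarrow> nat" where
  "ninv [] = 0" | "ninv (a # w) = card {b \<in> set w. b < a} + ninv w"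

definition sgnw :: "(nat \<times> nat) list \<Rightarrow> complex" where "sgnw w = (-1) ^ ninv w"

definition prodw :: "((nat \<times> nat) \<Rightarrow> nat) \<Rightarrow> (nat \<times> nat) list \<Rightarrow> salg" where
  "prodw e w = (if distinct w then sc (sgnw w) (mon (e, set w)) else 0)"

lemma fin_prodw[intro]: "fin (prodw e w)"
  by (auto simp: prodw_def)

lemma card_pairs_left:
  assumes "finite V"
  shows "card {(a', b). a' = a \<and> b \<in> V \<and> P b} = card {b \<in> V. P b}"
proof -
  have "{(a', b). a' = a \<and> b \<in> V \<and> P b} = Pair a ` {b \<in> V. P b}" by auto
  then show ?thesis by (simp add: card_image inj_on_def)
qed

lemma ninv_append:
  assumes "distinct (u @ v)"
  shows "ninv (u @ v) = ninv u + ninv v + card {(a, b). a \<in> set u \<and> b \<in> set v \<and> b < a}"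
  using assms
proof (induction u)
  case Nil
  then show ?case by simp
next
  case (Cons a u)
  let ?C = "\<lambda>u. {(a, b). a \<in> set u \<and> b \<in> set v \<and> b < a}"
  have an: "a \<notin> set u" "a \<notin> set v" using Cons.prems by auto
  have "{b \<in> set (u @ v). b < a} = {b \<in> set u. b < a} \<union> {b \<in> set v. b < a}" by auto
  moreover have "{b \<in> set u. b < a} \<inter> {b \<in> set v. b < a} = {}" using Cons.prems by auto
  ultimately have c1: "card {b \<in> set (u @ v). b < a} = card {b \<in> set u. b < a} + card {b \<in> set v. b < a}"
    by (simp add: card_Un_disjoint)
  have "?C (a # u) = {(a', b). a' = a \<and> b \<in> set v \<and> b < a} \<union> ?C u" by auto
  moreover have "{(a', b). a' = a \<and> b \<in> set v \<and> b < a} \<inter> ?C u = {}" using an by auto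
  moreover have "finite (?C u)"
    by (rule finite_subset[of _ "set u \<times> set v"]) auto
  moreover have "finite {(a', b). a' = a \<and> b \<in> set v \<and> b < a}"
    by (rule finite_subset[of _ "{a} \<times> set v"]) auto
  ultimately have c2: "card (?C (a # u)) = card {b \<in> set v. b < a} + card (?C u)"
    by (simp add: card_Un_disjoint card_pairs_left)
  have IH: "ninv (u @ v) = ninv u + ninv v + card (?C u)" using Cons by simp
  show ?case using c1 c2 IH by (simp only: ninv.simps append_Cons)
qed

lemma sgnw_append:
  assumes "distinct (u @ v)"
  shows "sgnw (u @ v) = sgnw u * sgnw v * theta_sign (set u) (set v)"
  by (simp add: sgnw_def theta_sign_def ninv_append[OF assms] power_add)

lemma theta_sign_Un_right:
  assumes "B \<inter> C = {}" "finite A" "finite B" "finite C"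
  shows "theta_sign A (B \<union> C) = theta_sign A B * theta_sign A C"
proof -
  let ?X = "{(a, b). a \<in> A \<and> b \<in> B \<and> b < a}"
  let ?Y = "{(a, b). a \<in> A \<and> b \<in> C \<and> b < a}"
  have e: "{(a, b). a \<in> A \<and> b \<in> B \<union> C \<and> b < a} = ?X \<union> ?Y" by auto
  have f1: "finite ?X"
    by (rule finite_subset[of _ "A \<times> B"]) (use assms in auto)
  have f2: "finite ?Y"
    by (rule finite_subset[of _ "A \<times> C"]) (use assms in auto)
  have d: "?X \<inter> ?Y = {}" using assms by auto
  have c: "card (?X \<union> ?Y) = card ?X + card ?Y" by (rule card_Un_disjoint[OF f1 f2 d])
  show ?thesis unfolding theta_sign_def e c power_add ..
qed

lemma theta_sign_sq: "theta_sign A B * theta_sign A B = 1"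
  unfolding theta_sign_def power_mult_distrib[symmetric] by simp

lemma neg1_pow_cases: "(-1::complex) ^ k = 1 \<or> (-1::complex) ^ k = -1"
  by (induction k) auto

lemma theta_sign_swap:
  assumes "A \<inter> B = {}" "finite A" "finite B"
  shows "theta_sign A B * theta_sign B A = (-1) ^ (card A * card B)"
proof -
  let ?X = "{(a, b). a \<in> A \<and> b \<in> B \<and> b < a}"
  let ?Y = "{(b, a). b \<in> B \<and> a \<in> A \<and> a < b}"
  let ?Y' = "{(a, b). a \<in> A \<and> b \<in> B \<and> a < b}"
  have "card ?Y = card ?Y'"
  proof -
    have "?Y = (\<lambda>(a, b). (b, a)) ` ?Y'" by auto
    then show ?thesis by (simp add: card_image inj_on_def)
  qed
  moreover have "?X \<union> ?Y' = A \<times> B"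
  proof
    show "A \<times> B \<subseteq> ?X \<union> ?Y'"
    proof
      fix p assume "p \<in> A \<times> B"
      then obtain a b where p: "p = (a, b)" "a \<in> A" "b \<in> B" by auto
      then have "a \<noteq> b" using assms(1) by auto
      then show "p \<in> ?X \<union> ?Y'" using p by (auto simp: neq_iff)
    qed
  qed auto
  moreover have d: "?X \<inter> ?Y' = {}" by auto
  moreover have f: "finite ?X" "finite ?Y'" by (rule finite_subset[of _ "A \<times> B"]; use assms in auto)+
  ultimately have "card ?X + card ?Y' = card (A \<times> B)"
    using card_Un_disjoint[OF f d] by argo
  then have "card ?X + card ?Y = card A * card B"
    using \<open>card ?Y = card ?Y'\<close> card_cartesian_product[of A B] by argo
  then show ?thesis unfolding theta_sign_def by (simp only: power_add[symmetric])
qed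

lemma theta_sign_pm: "theta_sign A B = 1 \<or> theta_sign A B = -1"
  unfolding theta_sign_def by (rule neg1_pow_cases)

lemma prodw_swap:
  "prodw e (u @ v @ w @ z) = sc ((-1) ^ (length v * length w)) (prodw e (u @ w @ v @ z))"
proof (cases "distinct (u @ v @ w @ z)")
  case False
  then have "\<not> distinct (u @ w @ v @ z)" by auto
  then have "prodw e (u @ w @ v @ z) = 0" by (simp only: prodw_def if_False)
  moreover have "prodw e (u @ v @ w @ z) = 0" using False by (simp only: prodw_def if_False)
  ultimately show ?thesis by simp
next
  case True
  then have T2: "distinct (u @ w @ v @ z)" by auto
  have st: "set (u @ v @ w @ z) = set (u @ w @ v @ z)" by auto
  let ?t = theta_sign
  have d: "distinct v" "distinct w" "distinct z" "set v \<inter> set w = {}" "set v \<inter> set z = {}"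
     "set w \<inter> set z = {}" using True by auto
  have "sgnw (u @ v @ w @ z) = sgnw u * sgnw (v @ w @ z) * ?t (set u) (set (v @ w @ z))"
    using True by (subst sgnw_append) auto
  also have "sgnw (v @ w @ z) = sgnw v * (sgnw w * sgnw z * ?t (set w) (set z)) * ?t (set v) (set (w @ z))"
    using True by (subst sgnw_append, simp, subst sgnw_append, auto)
  also have "?t (set v) (set (w @ z)) = ?t (set v) (set w) * ?t (set v) (set z)"
    using d by (simp add: theta_sign_Un_right)
  finally have e1: "sgnw (u @ v @ w @ z) = sgnw u * ?t (set u) (set (v @ w @ z)) *
      (sgnw v * sgnw w * sgnw z * ?t (set w) (set z) * ?t (set v) (set z)) * ?t (set v) (set w)"
    by (simp add: algebra_simps)
  have "sgnw (u @ w @ v @ z) = sgnw u * sgnw (w @ v @ z) * ?t (set u) (set (w @ v @ z))"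
    using T2 by (subst sgnw_append) auto
  also have "sgnw (w @ v @ z) = sgnw w * (sgnw v * sgnw z * ?t (set v) (set z)) * ?t (set w) (set (v @ z))"
    using T2 by (subst sgnw_append, simp, subst sgnw_append, auto)
  also have "?t (set w) (set (v @ z)) = ?t (set w) (set v) * ?t (set w) (set z)"
    using d by (simp add: theta_sign_Un_right)
  also have "set (w @ v @ z) = set (v @ w @ z)" by auto
  finally have e2: "sgnw (u @ w @ v @ z) = sgnw u * ?t (set u) (set (v @ w @ z)) *
      (sgnw v * sgnw w * sgnw z * ?t (set w) (set z) * ?t (set v) (set z)) * ?t (set w) (set v)"
    by (simp add: algebra_simps)
  have sw: "?t (set v) (set w) * ?t (set w) (set v) = (-1) ^ (length v * length w)"
    using theta_sign_swap[of "set v" "set w"] d by (simp add: distinct_card)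
  have "?t (set v) (set w) = (-1) ^ (length v * length w) * ?t (set w) (set v)"
    using sw theta_sign_sq[of "set w" "set v"] by (metis mult.assoc mult.right_neutral)
  then have "sgnw (u @ v @ w @ z) = (-1) ^ (length v * length w) * sgnw (u @ w @ v @ z)"
    using e1 e2 by (simp add: algebra_simps)
  then show ?thesis using True T2 st by (simp add: prodw_def sc_sc)
qed

lemma prodw_mul:
  "alg_mul (prodw e1 w1) (prodw e2 w2) = prodw (\<lambda>p. e1 p + e2 p) (w1 @ w2)"
proof (cases "distinct w1 \<and> distinct w2")
  case True
  have mm: "mono_mul (e1, set w1) (e2, set w2) = ((\<lambda>p. e1 p + e2 p), set (w1 @ w2))"
    by (simp add: mono_mul_def)
  show ?thesis
  proof (cases "set w1 \<inter> set w2 = {}")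
    case True2: True
    then have "distinct (w1 @ w2)" using True by auto
    then show ?thesis using True True2
      by (simp add: prodw_def alg_mul_mon mm sgnw_append)
  next
    case False
    then have "\<not> distinct (w1 @ w2)" by auto
    then show ?thesis using True False
      by (simp add: prodw_def alg_mul_mon)
  qed
next
  case False
  then show ?thesis by (auto simp: prodw_def alg_mul_zero_left alg_mul_zero_right)
qed

lemma ninv_sorted: "sorted w \<Longrightarrow> ninv w = 0"
  by (induction w) (auto simp: not_less)

lemma mon_prodw: "finite A \<Longrightarrow> mon (e, A) = prodw e (sorted_list_of_set A)"
  by (simp add: prodw_def sgnw_def ninv_sorted)

definition tau :: "(nat \<Rightarrow> nat) \<Rightarrow> nat \<times> nat \<Rightarrow> nat \<times> nat" where
  "tau \<sigma> = (\<lambda>(r, i). (\<sigma> r, i))"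
definition sx :: "(nat \<Rightarrow> nat) \<Rightarrow> ((nat \<times> nat) \<Rightarrow> nat) \<Rightarrow> ((nat \<times> nat) \<Rightarrow> nat)" where
  "sx \<sigma> e = (\<lambda>(r, k). e (inv \<sigma> r, k))"

lemma mono_act_eq: "mono_act \<sigma> (e, A) = (sx \<sigma> e, tau \<sigma> ` A)"
  by (simp add: mono_act_def sx_def tau_def)

lemma tau_apply: "tau \<sigma> b = (\<sigma> (fst b), snd b)"
  by (cases b) (simp add: tau_def)

lemma inj_tau: "inj \<sigma> \<Longrightarrow> inj (tau \<sigma>)"
  by (auto simp: inj_def tau_apply prod_eq_iff)

lemma perm_sign_tau:
  "perm_sign \<sigma> A = (-1) ^ card {(a, b). a \<in> A \<and> b \<in> A \<and> a < b \<and> tau \<sigma> b < tau \<sigma> a}"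
  by (simp add: perm_sign_def tau_apply)

lemma card_split:
  assumes "finite W"
  shows "card {b \<in> W. P b} = card {b \<in> W. P b \<and> Q b} + card {b \<in> W. P b \<and> \<not> Q b}"
proof -
  have "{b \<in> W. P b} = {b \<in> W. P b \<and> Q b} \<union> {b \<in> W. P b \<and> \<not> Q b}" by auto
  then show ?thesis using assms by (simp add: card_Un_disjoint disjoint_iff)
qed

lemma sgnw_map_tau:
  assumes "inj \<sigma>" "distinct w"
  shows "sgnw (map (tau \<sigma>) w) = sgnw w * perm_sign \<sigma> (set w)"
  using assms(2)
proof (induction w)
  case Nil
  then show ?case by (simp add: sgnw_def perm_sign_def)
next
  case (Cons a w)
  let ?t = "tau \<sigma>"
  let ?W = "set w"
  have inj: "inj ?t" using inj_tau[OF assms(1)] .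
  have aW: "a \<notin> ?W" "distinct w" using Cons.prems by auto
  let ?P = "\<lambda>A. {(x, y). x \<in> A \<and> y \<in> A \<and> x < y \<and> ?t y < ?t x}"
  define c1 where "c1 = card {b \<in> ?W. ?t b < ?t a}"
  define c2 where "c2 = card {b \<in> ?W. b < a}"
  define c3 where "c3 = card {b \<in> ?W. a < b \<and> ?t b < ?t a}"
  define c4 where "c4 = card {b \<in> ?W. b < a \<and> ?t a < ?t b}"
  define x where "x = card {b \<in> ?W. b < a \<and> ?t b < ?t a}"
  have "{y \<in> set (map ?t w). y < ?t a} = ?t ` {b \<in> ?W. ?t b < ?t a}" by auto
  then have "card {y \<in> set (map ?t w). y < ?t a} = c1"
    unfolding c1_def by (metis (no_types, lifting) card_image inj inj_on_subset top_greatest)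
  then have L: "sgnw (map ?t (a # w)) = (-1) ^ c1 * sgnw (map ?t w)"
    by (simp add: sgnw_def power_add)
  have R1: "sgnw (a # w) = (-1) ^ c2 * sgnw w" by (simp add: sgnw_def power_add c2_def)
  have "?P (insert a ?W) = ?P ?W \<union> (Pair a ` {b \<in> ?W. a < b \<and> ?t b < ?t a}
      \<union> (\<lambda>b. (b, a)) ` {b \<in> ?W. b < a \<and> ?t a < ?t b})" by auto
  moreover have "finite (?P ?W)" by (rule finite_subset[of _ "?W \<times> ?W"]) auto
  moreover have "?P ?W \<inter> (Pair a ` {b \<in> ?W. a < b \<and> ?t b < ?t a}
      \<union> (\<lambda>b. (b, a)) ` {b \<in> ?W. b < a \<and> ?t a < ?t b}) = {}" using aW by auto
  moreover have "Pair a ` {b \<in> ?W. a < b \<and> ?t b < ?t a} \<inter> (\<lambda>b. (b, a)) ` {b \<in> ?W. b < a \<and> ?t a < ?t b} = {}"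
    by auto
  moreover have "card (Pair a ` {b \<in> ?W. a < b \<and> ?t b < ?t a}) = c3"
    unfolding c3_def by (simp add: card_image inj_on_def)
  moreover have "card ((\<lambda>b. (b, a)) ` {b \<in> ?W. b < a \<and> ?t a < ?t b}) = c4"
    unfolding c4_def by (simp add: card_image inj_on_def)
  ultimately have cP: "card (?P (insert a ?W)) = card (?P ?W) + c3 + c4"
    by (simp add: card_Un_disjoint)
  have R2: "perm_sign \<sigma> (set (a # w)) = perm_sign \<sigma> ?W * (-1) ^ c3 * (-1) ^ c4"
    unfolding perm_sign_tau using cP by (simp add: power_add)
  have fW: "finite ?W" by simp
  have c1eq: "c1 = x + c3"
  proof -
    have "{b \<in> ?W. ?t b < ?t a \<and> \<not> b < a} = {b \<in> ?W. a < b \<and> ?t b < ?t a}"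
      using aW by (auto simp: not_less order.order_iff_strict)
    moreover have "{b \<in> ?W. ?t b < ?t a \<and> b < a} = {b \<in> ?W. b < a \<and> ?t b < ?t a}" by auto
    ultimately show ?thesis
      unfolding c1_def x_def c3_def using card_split[OF fW, of "\<lambda>b. ?t b < ?t a" "\<lambda>b. b < a"]
      by simp
  qed
  have c2eq: "c2 = x + c4"
  proof -
    have ne: "\<And>b. b \<in> ?W \<Longrightarrow> ?t b \<noteq> ?t a" using aW inj by (metis injD)
    have "{b \<in> ?W. b < a \<and> \<not> ?t b < ?t a} = {b \<in> ?W. b < a \<and> ?t a < ?t b}"
    proof (rule Collect_cong)
      fix b show "(b \<in> ?W \<and> b < a \<and> \<not> ?t b < ?t a) \<longleftrightarrow> (b \<in> ?W \<and> b < a \<and> ?t a < ?t b)"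
        using ne[of b] by (auto simp: not_less order.order_iff_strict)
    qed
    then show ?thesis
      unfolding c2_def x_def c4_def using card_split[OF fW, of "\<lambda>b. b < a" "\<lambda>b. ?t b < ?t a"]
      by simp
  qed
  have sq: "(-1::complex) ^ c4 * (-1) ^ c4 = 1" by (metis mult_2 power_add power_minus1_even)
  have "(-1::complex) ^ c2 * (-1) ^ c3 * (-1) ^ c4 = (-1) ^ x * (-1) ^ c3 * ((-1) ^ c4 * (-1) ^ c4)"
    by (simp only: c2eq power_add mult_ac)
  also have "\<dots> = (-1) ^ c1" by (simp only: sq c1eq power_add mult_1_right)
  finally have par: "(-1::complex) ^ c1 = (-1) ^ c2 * (-1) ^ c3 * (-1) ^ c4" by simp
  have "sgnw (map ?t (a # w)) = (-1) ^ c1 * (sgnw w * perm_sign \<sigma> ?W)"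
    using L Cons.IH[OF aW(2)] by simp
  also have "\<dots> = ((-1) ^ c2 * sgnw w) * (perm_sign \<sigma> ?W * (-1) ^ c3 * (-1) ^ c4)"
    unfolding par by (simp only: mult_ac)
  also have "\<dots> = sgnw (a # w) * perm_sign \<sigma> (set (a # w))"
    by (simp only: R1 R2)
  finally show ?case .
qed

lemma act_prodw:
  assumes "inj \<sigma>"
  shows "alg_act \<sigma> (prodw e w) = prodw (sx \<sigma> e) (map (tau \<sigma>) w)"
proof -
  have dm: "distinct (map (tau \<sigma>) w) \<longleftrightarrow> distinct w"
    using inj_tau[OF assms] by (metis distinct_map inj_on_subset subset_UNIV)
  show ?thesis
  proof (cases "distinct w")
    case True
    have "alg_act \<sigma> (prodw e w) = alg_act \<sigma> (sc (sgnw w) (mon (e, set w)))"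
      using True by (simp only: prodw_def if_True)
    also have "\<dots> = sc (sgnw w * perm_sign \<sigma> (set w)) (mon (sx \<sigma> e, tau \<sigma> ` set w))"
      by (simp only: alg_act_mon mono_act_eq snd_conv)
    also have "\<dots> = prodw (sx \<sigma> e) (map (tau \<sigma>) w)"
      using True dm by (simp only: prodw_def if_True sgnw_map_tau[OF assms True] set_map)
    finally show ?thesis .
  next
    case False
    then show ?thesis using dm by (simp only: prodw_def if_False alg_act_zero)
  qed
qed

lemma sx_add: "sx \<sigma> (\<lambda>p. e1 p + e2 p) = (\<lambda>p. sx \<sigma> e1 p + sx \<sigma> e2 p)"
  by (auto simp: sx_def)



fun thl :: "(nat + nat) list \<Rightarrow> nat list" where
  "thl [] = []" | "thl (Inl k # L) = thl L" | "thl (Inr i # L) = i # thl L"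

definition xexp :: "nat \<Rightarrow> (nat + nat) list \<Rightarrow> (nat \<times> nat \<Rightarrow> nat)" where
  "xexp r L = (\<lambda>(r', k). if r' = r then count (mset L) (Inl k) else 0)"

definition tw :: "nat \<Rightarrow> (nat + nat) list \<Rightarrow> (nat \<times> nat) list" where
  "tw r L = map (Pair r) (thl L)"

fun plx :: "nat list \<Rightarrow> (nat + nat) list list \<Rightarrow> (nat \<times> nat \<Rightarrow> nat)" where
  "plx (r # rs) (T # Ts) = (\<lambda>p. xexp r T p + plx rs Ts p)"
| "plx _ _ = (\<lambda>_. 0)"

fun plw :: "nat list \<Rightarrow> (nat + nat) list list \<Rightarrow> (nat \<times> nat) list" where
  "plw (r # rs) (T # Ts) = tw r T @ plw rs Ts"
| "plw _ _ = []"

definition trm :: "nat list \<Rightarrow> (nat + nat) list list \<Rightarrow> salg" where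
  "trm rs Ts = prodw (plx rs Ts) (plw rs Ts)"

definition injl :: "nat \<Rightarrow> nat \<Rightarrow> nat list set" where
  "injl n k = {rs. length rs = k \<and> distinct rs \<and> set rs \<subseteq> {1..n}}"

definition EE :: "nat \<Rightarrow> (nat + nat) list list \<Rightarrow> salg" where
  "EE n Ts = (\<Sum>rs\<in>injl n (length Ts). trm rs Ts)"

definition QQ :: "nat \<Rightarrow> (nat + nat) list \<Rightarrow> salg" where
  "QQ n L = EE n [L]"

definition eps :: "(nat + nat) list \<Rightarrow> (nat + nat) list list \<Rightarrow> nat \<Rightarrow> complex" where
  "eps T Ts j = (-1) ^ (length (thl T) * length (thl (concat (take j Ts))))"

lemma eps_sq: "eps T Ts j * eps T Ts j = 1"
  unfolding eps_def power_mult_distrib[symmetric] by simp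

lemma finite_injl[simp]: "finite (injl n k)"
proof -
  have "injl n k \<subseteq> {xs. set xs \<subseteq> {1..n} \<and> length xs = k}" by (auto simp: injl_def)
  then show ?thesis using finite_lists_length_eq[of "{1..n}" k] finite_subset by blast
qed

lemma fin_trm[intro]: "fin (trm rs Ts)" by (simp add: trm_def fin_prodw)
lemma fin_EE[intro]: "fin (EE n Ts)" unfolding EE_def by (rule fin_sum) auto
lemma fin_QQ[intro]: "fin (QQ n L)" unfolding QQ_def by auto

lemma thl_append: "thl (a @ b) = thl a @ thl b"
  by (induction a rule: thl.induct) auto

lemma tw_append: "tw r (a @ b) = tw r a @ tw r b"
  by (simp add: tw_def thl_append)

lemma length_tw: "length (tw r L) = length (thl L)"
  by (simp add: tw_def)

lemma xexp_append: "xexp r (a @ b) = (\<lambda>p. xexp r a p + xexp r b p)"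
  by (auto simp: xexp_def)

lemma length_plw: "length rs = length Ts \<Longrightarrow> length (plw rs Ts) = length (thl (concat Ts))"
proof (induction rs Ts rule: plw.induct)
  case (1 r rs T Ts)
  then show ?case by (simp add: thl_append length_tw)
qed auto

lemma plw_split:
  "length rs = length Ts \<Longrightarrow> j < length Ts \<Longrightarrow>
   plw rs Ts = plw (take j rs) (take j Ts) @ tw (rs ! j) (Ts ! j) @ plw (drop (Suc j) rs) (drop (Suc j) Ts)"
proof (induction j arbitrary: rs Ts)
  case 0
  then show ?case by (cases rs; cases Ts) auto
next
  case (Suc j)
  then show ?case by (cases rs; cases Ts) auto
qed

lemma plx_split:
  "length rs = length Ts \<Longrightarrow> j < length Ts \<Longrightarrow>
   plx rs Ts p = plx (take j rs) (take j Ts) p + xexp (rs ! j) (Ts ! j) p + plx (drop (Suc j) rs) (drop (Suc j) Ts) p"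
proof (induction j arbitrary: rs Ts)
  case 0
  then show ?case by (cases rs; cases Ts) auto
next
  case (Suc j)
  then show ?case by (cases rs; cases Ts) auto
qed

lemma merge_term:
  assumes "length rs = length Ts" "j < length Ts"
  shows "trm ((rs ! j) # rs) (T # Ts) = sc (eps T Ts j) (trm rs (Ts[j := T @ Ts ! j]))"
proof -
  let ?r = "rs ! j"
  let ?Ts' = "Ts[j := T @ Ts ! j]"
  have l': "length rs = length ?Ts'" "j < length ?Ts'" using assms by auto
  have tk: "take j ?Ts' = take j Ts" "drop (Suc j) ?Ts' = drop (Suc j) Ts" "?Ts' ! j = T @ Ts ! j"
    using assms by auto
  let ?A = "plw (take j rs) (take j Ts)"
  let ?B = "plw (drop (Suc j) rs) (drop (Suc j) Ts)"
  have w1: "plw (?r # rs) (T # Ts) = [] @ tw ?r T @ ?A @ (tw ?r (Ts ! j) @ ?B)"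
    using plw_split[OF assms] by simp
  have w2: "plw rs ?Ts' = [] @ ?A @ tw ?r T @ (tw ?r (Ts ! j) @ ?B)"
    using plw_split[OF l'] tk by (simp add: tw_append)
  have x: "plx (?r # rs) (T # Ts) = plx rs ?Ts'"
  proof
    fix p
    show "plx (?r # rs) (T # Ts) p = plx rs ?Ts' p"
      using plx_split[OF assms, of p] plx_split[OF l', of p] tk by (simp add: xexp_append)
  qed
  have len: "length ?A = length (thl (concat (take j Ts)))"
    using assms by (simp add: length_plw)
  show ?thesis
    unfolding trm_def w1 w2 x prodw_swap[of _ "[]" "tw ?r T" ?A] eps_def length_tw len ..
qed

lemma injl_Suc_bij:
  "bij_betw (\<lambda>(rs, r). r # rs) (SIGMA rs:injl n k. {1..n} - set rs) (injl n (Suc k))"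
proof (rule bij_betwI')
  show "\<And>x y. x \<in> (SIGMA rs:injl n k. {1..n} - set rs) \<Longrightarrow> y \<in> (SIGMA rs:injl n k. {1..n} - set rs) \<Longrightarrow>
     ((case x of (rs, r) \<Rightarrow> r # rs) = (case y of (rs, r) \<Rightarrow> r # rs)) = (x = y)"
    by auto
  show "\<And>x. x \<in> (SIGMA rs:injl n k. {1..n} - set rs) \<Longrightarrow> (case x of (rs, r) \<Rightarrow> r # rs) \<in> injl n (Suc k)"
    by (auto simp: injl_def)
  show "\<And>y. y \<in> injl n (Suc k) \<Longrightarrow> \<exists>x\<in>(SIGMA rs:injl n k. {1..n} - set rs). y = (case x of (rs, r) \<Rightarrow> r # rs)"
  proof -
    fix y assume "y \<in> injl n (Suc k)"
    then obtain r rs where "y = r # rs" "length rs = k" "distinct (r # rs)" "set (r # rs) \<subseteq> {1..n}"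
      unfolding injl_def by (cases y) auto
    then show "\<exists>x\<in>(SIGMA rs:injl n k. {1..n} - set rs). y = (case x of (rs, r) \<Rightarrow> r # rs)"
      by (intro bexI[of _ "(rs, r)"]) (auto simp: injl_def)
  qed
qed

lemma injl_one: "injl n (Suc 0) = (\<lambda>r. [r]) ` {1..n}"
proof (intro equalityI subsetI)
  fix x assume x: "x \<in> injl n (Suc 0)"
  then have "length x = Suc 0" "set x \<subseteq> {1..n}" by (auto simp: injl_def)
  moreover obtain r where "x = [r]" using \<open>length x = Suc 0\<close> by (metis length_0_conv length_Suc_conv)
  ultimately show "x \<in> (\<lambda>r. [r]) ` {1..n}" by auto
qed (auto simp: injl_def)

lemma EE_one: "EE n [T] = (\<Sum>r\<in>{1..n}. trm [r] [T])"
  unfolding EE_def by (simp add: injl_one sum.reindex inj_on_def)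

lemma sum_set_nth:
  assumes "distinct rs"
  shows "(\<Sum>r\<in>set rs. g r) = (\<Sum>j<length rs. g (rs ! j))"
proof -
  have "set rs = (\<lambda>j. rs ! j) ` {..<length rs}" by (auto simp: set_conv_nth)
  moreover have "inj_on (\<lambda>j. rs ! j) {..<length rs}"
    using assms by (auto simp: inj_on_def nth_eq_iff_index_eq)
  ultimately show ?thesis by (simp add: sum.reindex)
qed

lemma trm_cons_mul: "alg_mul (trm [r] [T]) (trm rs Ts) = trm (r # rs) (T # Ts)"
proof -
  have "(\<lambda>p. plx [r] [T] p + plx rs Ts p) = plx (r # rs) (T # Ts)" by auto
  then show ?thesis unfolding trm_def prodw_mul by simp
qed

lemma QQ_EE_rec:
  "alg_mul (QQ n T) (EE n Ts) =
     EE n (T # Ts) + (\<Sum>j<length Ts. sc (eps T Ts j) (EE n (Ts[j := T @ Ts ! j])))"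
proof -
  let ?k = "length Ts"
  let ?I = "injl n ?k"
  have "alg_mul (QQ n T) (EE n Ts) = (\<Sum>rs\<in>?I. \<Sum>r\<in>{1..n}. alg_mul (trm [r] [T]) (trm rs Ts))"
    unfolding QQ_def EE_one EE_def[of n Ts]
    by (simp add: alg_mul_sum_left alg_mul_sum_right fin_sum fin_trm)
  also have "\<dots> = (\<Sum>rs\<in>?I. \<Sum>r\<in>{1..n}. trm (r # rs) (T # Ts))"
    by (simp add: trm_cons_mul)
  also have "\<dots> = (\<Sum>rs\<in>?I. (\<Sum>r\<in>{1..n} - set rs. trm (r # rs) (T # Ts)) + (\<Sum>r\<in>set rs. trm (r # rs) (T # Ts)))"
    by (intro sum.cong refl sum.subset_diff) (auto simp: injl_def)
  also have "\<dots> = (\<Sum>rs\<in>?I. \<Sum>r\<in>{1..n} - set rs. trm (r # rs) (T # Ts)) + (\<Sum>rs\<in>?I. \<Sum>r\<in>set rs. trm (r # rs) (T # Ts))"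
    by (rule sum.distrib)
  also have "(\<Sum>rs\<in>?I. \<Sum>r\<in>{1..n} - set rs. trm (r # rs) (T # Ts)) = EE n (T # Ts)"
  proof -
    have "(\<Sum>rs\<in>?I. \<Sum>r\<in>{1..n} - set rs. trm (r # rs) (T # Ts)) =
        (\<Sum>x\<in>(SIGMA rs:?I. {1..n} - set rs). (\<lambda>rs'. trm rs' (T # Ts)) ((\<lambda>(rs, r). r # rs) x))"
      by (subst sum.Sigma) (auto intro!: sum.cong simp: split_beta)
    also have "\<dots> = (\<Sum>rs'\<in>injl n (Suc ?k). trm rs' (T # Ts))"
      by (rule sum.reindex_bij_betw[OF injl_Suc_bij])
    finally show ?thesis by (simp add: EE_def)
  qed
  also have "(\<Sum>rs\<in>?I. \<Sum>r\<in>set rs. trm (r # rs) (T # Ts)) = (\<Sum>rs\<in>?I. \<Sum>j<?k. sc (eps T Ts j) (trm rs (Ts[j := T @ Ts ! j])))"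
  proof (rule sum.cong[OF refl])
    fix rs assume "rs \<in> ?I"
    then have rs: "length rs = ?k" "distinct rs" by (auto simp: injl_def)
    show "(\<Sum>r\<in>set rs. trm (r # rs) (T # Ts)) = (\<Sum>j<?k. sc (eps T Ts j) (trm rs (Ts[j := T @ Ts ! j])))"
      unfolding sum_set_nth[OF rs(2)] rs(1)
      by (rule sum.cong[OF refl]) (use rs in \<open>simp add: merge_term\<close>)
  qed
  also have "\<dots> = (\<Sum>j<?k. sc (eps T Ts j) (EE n (Ts[j := T @ Ts ! j])))"
    by (subst sum.swap) (simp add: EE_def sc_sum)
  finally show ?thesis .
qed

lemma concat_update:
  "j < length Ts \<Longrightarrow> concat (Ts[j := X]) = concat (take j Ts) @ X @ concat (drop (Suc j) Ts)"
  by (simp add: upd_conv_take_nth_drop)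

lemma concat_nth_split:
  "j < length Ts \<Longrightarrow> concat Ts = concat (take j Ts) @ Ts ! j @ concat (drop (Suc j) Ts)"
  by (metis append_take_drop_id concat.simps(2) concat_append Cons_nth_drop_Suc)

lemma QQ_eq: "QQ n L = (\<Sum>r\<in>{1..n}. prodw (xexp r L) (tw r L))"
proof -
  have "\<And>r. trm [r] [L] = prodw (xexp r L) (tw r L)"
  proof -
    fix r
    have "plx [r] [L] = xexp r L" by auto
    then show "trm [r] [L] = prodw (xexp r L) (tw r L)" by (simp add: trm_def)
  qed
  then show ?thesis by (simp add: QQ_def EE_one)
qed

lemma xexp_perm: "mset a = mset b \<Longrightarrow> xexp r a = xexp r b"
  unfolding xexp_def by (simp only:)

lemma QQ_merge:
  assumes "j < length Ts"
  shows "QQ n (T @ concat Ts) = sc (eps T Ts j) (QQ n (concat (Ts[j := T @ Ts ! j])))"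
proof -
  let ?C1 = "concat (take j Ts)"
  let ?C2 = "concat (drop (Suc j) Ts)"
  let ?Tj = "Ts ! j"
  have e1: "T @ concat Ts = T @ ?C1 @ ?Tj @ ?C2" using concat_nth_split[OF assms] by simp
  have e2: "concat (Ts[j := T @ ?Tj]) = ?C1 @ T @ ?Tj @ ?C2" using concat_update[OF assms] by simp
  have "\<And>r. prodw (xexp r (T @ ?C1 @ ?Tj @ ?C2)) (tw r (T @ ?C1 @ ?Tj @ ?C2)) =
        sc (eps T Ts j) (prodw (xexp r (?C1 @ T @ ?Tj @ ?C2)) (tw r (?C1 @ T @ ?Tj @ ?C2)))"
  proof -
    fix r
    have x: "xexp r (T @ ?C1 @ ?Tj @ ?C2) = xexp r (?C1 @ T @ ?Tj @ ?C2)"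
      by (rule xexp_perm) simp
    have "tw r (T @ ?C1 @ ?Tj @ ?C2) = [] @ tw r T @ tw r ?C1 @ tw r (?Tj @ ?C2)"
      by (simp add: tw_append)
    moreover have "tw r (?C1 @ T @ ?Tj @ ?C2) = [] @ tw r ?C1 @ tw r T @ tw r (?Tj @ ?C2)"
      by (simp add: tw_append)
    ultimately show "prodw (xexp r (T @ ?C1 @ ?Tj @ ?C2)) (tw r (T @ ?C1 @ ?Tj @ ?C2)) =
        sc (eps T Ts j) (prodw (xexp r (?C1 @ T @ ?Tj @ ?C2)) (tw r (?C1 @ T @ ?Tj @ ?C2)))"
      unfolding x by (simp only: prodw_swap[of _ "[]" "tw r T"] eps_def length_tw)
  qed
  then show ?thesis unfolding QQ_eq e1 e2 sc_sum by simp
qed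



abbreviation GA :: "nat \<Rightarrow> nat \<Rightarrow> nat \<Rightarrow> salg set" where
  "GA n m m' \<equiv> gen_subalg {psum n S | S. admissible_ms n m m' S}"

definition atoms :: "nat \<Rightarrow> nat \<Rightarrow> (nat + nat) set" where
  "atoms m m' = Inl ` {1..m} \<union> Inr ` {1..m'}"

lemma psum_mon: "psum n S = (\<Sum>r\<in>{1..n}. mon (row_mono r S))"
proof
  fix \<mu>
  have "(\<Sum>r\<in>{1..n}. mon (row_mono r S)) \<mu> = (\<Sum>r\<in>{1..n}. if row_mono r S = \<mu> then 1 else 0)"
    unfolding sum_fun_apply by (intro sum.cong refl) (auto simp: mon_def)
  also have "\<dots> = of_nat (card {r \<in> {1..n}. row_mono r S = \<mu>})"
    by (simp add: sum.If_cases Int_def conj_commute)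
  finally show "psum n S \<mu> = (\<Sum>r\<in>{1..n}. mon (row_mono r S)) \<mu>" by (simp add: psum_def)
qed

lemma fin_psum[intro]: "fin (psum n S)"
  unfolding psum_mon by (rule fin_sum) auto

lemma gen_fin: "f \<in> GA n m m' \<Longrightarrow> fin f"
proof (induction rule: gen_subalg.induct)
  case (const c)
  have "supp (alg_const c) \<subseteq> {((\<lambda>_. 0), {})}" by (auto simp: supp_def alg_const_def)
  then show ?case unfolding fin_def using finite_subset by blast
next
  case (gen g)
  then show ?case by auto
next
  case (add f g)
  then show ?case unfolding alg_add_eq by (intro fin_add) auto
next
  case (mul f g)
  then show ?case by (simp add: fin_alg_mul)
qed

lemma alg_const_sc: "alg_const c = sc c (mon ((\<lambda>_. 0), {}))"
  by (auto simp: alg_const_def sc_def mon_def)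

lemma alg_mul_const:
  assumes "fin f"
  shows "alg_mul (alg_const c) f = sc c f"
proof
  fix \<mu>
  have fa: "finite {((\<lambda>_. 0::nat), ({}::(nat\<times>nat) set))}" "finite (supp f)" using assms by (auto simp: fin_def)
  have s: "supp (alg_const c) \<subseteq> {((\<lambda>_. 0), {})}" by (auto simp: supp_def alg_const_def)
  have mm: "\<And>\<beta>. mono_mul ((\<lambda>_. 0), {}) \<beta> = \<beta>" by (auto simp: mono_mul_def)
  have "alg_mul (alg_const c) f \<mu> = (\<Sum>\<beta>\<in>supp f. KK \<mu> ((\<lambda>_. 0), {}) \<beta> * c * f \<beta>)"
    using alg_mul_KK[OF fa s order.refl] by (simp add: alg_const_def)
  also have "\<dots> = (\<Sum>\<beta>\<in>supp f. if \<beta> = \<mu> then c * f \<beta> else 0)"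
    by (intro sum.cong refl) (auto simp: KK_def mm theta_sign_def)
  also have "\<dots> = c * f \<mu>"
    using fa(2) by (simp add: sum.delta supp_iff)
  finally show "alg_mul (alg_const c) f \<mu> = sc c f \<mu>" by (simp add: sc_def)
qed

lemma GA_sc:
  assumes "f \<in> GA n m m'" shows "sc c f \<in> GA n m m'"
proof -
  have "alg_mul (alg_const c) f \<in> GA n m m'" by (rule gen_subalg.mul[OF gen_subalg.const assms])
  then show ?thesis by (simp only: alg_mul_const[OF gen_fin[OF assms]])
qed

lemma GA_zero: "0 \<in> GA n m m'"
proof -
  have "alg_const 0 = (0::salg)" by (auto simp: alg_const_def)
  then show ?thesis using gen_subalg.const[of 0] by simp
qed

lemma GA_add: "f \<in> GA n m m' \<Longrightarrow> g \<in> GA n m m' \<Longrightarrow> f + g \<in> GA n m m'"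
  using gen_subalg.add[of f _ g] unfolding alg_add_eq by blast

lemma GA_mul: "f \<in> GA n m m' \<Longrightarrow> g \<in> GA n m m' \<Longrightarrow> alg_mul f g \<in> GA n m m'"
  by (rule gen_subalg.mul)

lemma sc_minus_one: "sc (-1) g = - g"
  by (auto simp: sc_def)

lemma GA_diff: "f \<in> GA n m m' \<Longrightarrow> g \<in> GA n m m' \<Longrightarrow> f - g \<in> GA n m m'"
  using GA_add[of f n m m' "sc (-1) g"] GA_sc[of g n m m' "-1"] by (simp add: sc_minus_one)

lemma GA_sum: "(\<And>i. i \<in> I \<Longrightarrow> F i \<in> GA n m m') \<Longrightarrow> sum F I \<in> GA n m m'"
  by (induction I rule: infinite_finite_induct) (auto simp: GA_zero GA_add)

lemma GA_one: "mon ((\<lambda>_. 0), {}) \<in> GA n m m'"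
  using gen_subalg.const[of 1] alg_const_sc[of 1] by simp

lemma ninv_map_Pair: "ninv (map (Pair r) w) = ninv w"
proof (induction w)
  case (Cons a w)
  have "{y \<in> set (map (Pair r) w). y < (r, a)} = Pair r ` {b \<in> set w. b < a}" by auto
  then have "card {y \<in> set (map (Pair r) w). y < (r, a)} = card {b \<in> set w. b < a}"
    by (simp add: card_image inj_on_def)
  then show ?case using Cons by simp
qed simp

lemma set_thl: "i \<in> set (thl L) \<longleftrightarrow> Inr i \<in> set L"
  by (induction L rule: thl.induct) auto

lemma count_thl: "count (mset L) (Inr i) = count (mset (thl L)) i"
  by (induction L rule: thl.induct) auto

lemma prodw_row:
  assumes "distinct (thl L)"
  shows "prodw (xexp r L) (tw r L) = sc ((-1) ^ ninv (thl L)) (mon (row_mono r (mset L)))"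
proof -
  have d: "distinct (tw r L)" using assms by (simp add: tw_def distinct_map inj_on_def)
  have "row_mono r (mset L) = (xexp r L, set (tw r L))"
    by (auto simp: row_mono_def xexp_def tw_def set_thl)
  then show ?thesis using d by (simp add: prodw_def sgnw_def tw_def ninv_map_Pair)
qed

lemma QQ_psum:
  assumes "distinct (thl L)"
  shows "QQ n L = sc ((-1) ^ ninv (thl L)) (psum n (mset L))"
  unfolding QQ_eq psum_mon sc_sum using prodw_row[OF assms] by simp

lemma QQ_zero:
  assumes "\<not> distinct (thl L)"
  shows "QQ n L = 0"
proof -
  have "\<And>r. \<not> distinct (tw r L)" using assms by (simp add: tw_def distinct_map inj_on_def)
  then show ?thesis unfolding QQ_eq by (simp add: prodw_def)
qed

lemma QQ_small:
  assumes "set L \<subseteq> atoms m m'" "length L \<le> n"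
  shows "QQ n L \<in> GA n m m'"
proof (cases "distinct (thl L)")
  case True
  have "admissible_ms n m m' (mset L)"
    unfolding admissible_ms_def
  proof (intro conjI allI)
    show "set_mset (mset L) \<subseteq> Inl ` {1..m} \<union> Inr ` {1..m'}" using assms by (simp add: atoms_def)
    fix j show "count (mset L) (Inr j) \<le> 1"
      unfolding count_thl using True by (simp add: distinct_count_atmost_1)
  next
    show "size (mset L) \<le> n" using assms by simp
  qed
  then have "psum n (mset L) \<in> GA n m m'" by (blast intro: gen_subalg.gen)
  then show ?thesis unfolding QQ_psum[OF True] by (rule GA_sc)
next
  case False
  then show ?thesis by (simp add: QQ_zero GA_zero)
qed



lemma mset_concat_update:
  assumes "j < length Ts"
  shows "mset (concat (Ts[j := T @ Ts ! j])) = mset (T @ concat Ts)"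
  using concat_update[OF assms, of "T @ Ts ! j"] concat_nth_split[OF assms] by simp

lemma EE_Nil: "EE n [] = mon ((\<lambda>_. 0), {})"
proof -
  have "injl n 0 = {[]}" by (auto simp: injl_def)
  moreover have "plx [] [] = (\<lambda>_. 0)" by simp
  ultimately show ?thesis by (simp add: EE_def trm_def prodw_def sgnw_def)
qed

lemma EE_rec_diff:
  "EE n (T # Ts) = alg_mul (QQ n T) (EE n Ts) - (\<Sum>j<length Ts. sc (eps T Ts j) (EE n (Ts[j := T @ Ts ! j])))"
  using QQ_EE_rec[of n T Ts] by (simp add: eq_diff_eq)

lemma EE_in:
  assumes hQ: "\<And>L. set L \<subseteq> atoms m m' \<Longrightarrow> length L \<le> D \<Longrightarrow> QQ n L \<in> GA n m m'"
  shows "set (concat Ts) \<subseteq> atoms m m' \<Longrightarrow> length (concat Ts) \<le> D \<Longrightarrow> EE n Ts \<in> GA n m m'"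
proof (induction "length Ts" arbitrary: Ts rule: less_induct)
  case less
  show ?case
  proof (cases Ts)
    case Nil
    then show ?thesis by (simp add: EE_Nil GA_one)
  next
    case (Cons T Ts')
    have q: "QQ n T \<in> GA n m m'"
      by (rule hQ) (use less.prems Cons in auto)
    have e: "EE n Ts' \<in> GA n m m'"
      by (rule less.hyps) (use less.prems Cons in auto)
    have ej: "EE n (Ts'[j := T @ Ts' ! j]) \<in> GA n m m'" if "j < length Ts'" for j
    proof (rule less.hyps)
      show "length (Ts'[j := T @ Ts' ! j]) < length Ts" using Cons by simp
      have "mset (concat (Ts'[j := T @ Ts' ! j])) = mset (concat Ts)"
        using mset_concat_update[OF that, of T] Cons by simp
      then have "set (concat (Ts'[j := T @ Ts' ! j])) = set (concat Ts)"
        "length (concat (Ts'[j := T @ Ts' ! j])) = length (concat Ts)"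
        by (metis set_mset_mset, metis size_mset)
      then show "set (concat (Ts'[j := T @ Ts' ! j])) \<subseteq> atoms m m'"
        "length (concat (Ts'[j := T @ Ts' ! j])) \<le> D" using less.prems by auto
    qed
    show ?thesis unfolding Cons EE_rec_diff
      by (intro GA_diff GA_mul q e GA_sum GA_sc ej) auto
  qed
qed

definition cc :: "nat \<Rightarrow> complex" where "cc k = (-1) ^ k * fact k"

lemma cc_Suc: "cc (Suc k) = - (of_nat (Suc k) * cc k)"
  by (simp add: cc_def algebra_simps)

lemma cc_nz: "cc k \<noteq> 0"
  by (simp add: cc_def)

lemma EE_mod:
  assumes hQ: "\<And>L. set L \<subseteq> atoms m m' \<Longrightarrow> length L < d \<Longrightarrow> QQ n L \<in> GA n m m'"
  shows "length Ts = k \<Longrightarrow> (\<forall>X\<in>set (T # Ts). X \<noteq> []) \<Longrightarrow> set (concat (T # Ts)) \<subseteq> atoms m m' \<Longrightarrow>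
    length (concat (T # Ts)) = d \<Longrightarrow>
    EE n (T # Ts) - sc (cc k) (QQ n (concat (T # Ts))) \<in> GA n m m'"
proof (induction k arbitrary: T Ts)
  case 0
  then have "Ts = []" by simp
  then have "EE n (T # Ts) - sc (cc 0) (QQ n (concat (T # Ts))) = 0" by (simp add: QQ_def cc_def)
  then show ?case using GA_zero 0 by (simp only:)
next
  case (Suc k)
  let ?Q = "QQ n (T @ concat Ts)"
  let ?U = "\<lambda>j. Ts[j := T @ Ts ! j]"
  let ?E = "\<lambda>j. EE n (?U j)"
  let ?D = "\<lambda>j. ?E j - sc (cc k) (QQ n (concat (?U j)))"
  have Tne: "T \<noteq> []" using Suc.prems by auto
  have Dj: "?D j \<in> GA n m m'" if j: "j < length Ts" for j
  proof -
    have lu: "length (?U j) = Suc k" using Suc.prems by simp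
    then obtain Y Ys where YY: "?U j = Y # Ys" by (cases "?U j") auto
    then have lYs: "length Ys = k" using lu by simp
    have ms: "mset (concat (Y # Ys)) = mset (concat (T # Ts))"
      using mset_concat_update[OF j, of T] YY by simp
    have ne: "\<forall>X\<in>set (Y # Ys). X \<noteq> []"
    proof
      fix X assume "X \<in> set (Y # Ys)"
      then have "X \<in> set (?U j)" using YY by simp
      then have "X \<in> insert (T @ Ts ! j) (set Ts)" using set_update_subset_insert by fast
      then show "X \<noteq> []" using Suc.prems Tne by auto
    qed
    have "set (concat (Y # Ys)) = set (concat (T # Ts))" "length (concat (Y # Ys)) = length (concat (T # Ts))"
      using ms by (metis set_mset_mset, metis size_mset)
    then have "EE n (Y # Ys) - sc (cc k) (QQ n (concat (Y # Ys))) \<in> GA n m m'"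
      by (intro Suc.IH[OF lYs ne]) (use Suc.prems in auto)
    then show ?thesis using YY by (simp only:)
  qed
  have Qj: "QQ n (concat (?U j)) = sc (eps T Ts j) ?Q" if j: "j < length Ts" for j
    unfolding QQ_merge[OF j, of n T] sc_sc eps_sq by simp
  have Tsne: "Ts \<noteq> []" using Suc.prems(1) by auto
  then have "hd Ts \<in> set Ts" by simp
  then have "hd Ts \<noteq> []" using Suc.prems(2) by auto
  then have "concat Ts \<noteq> []" using Tsne by (cases Ts) auto
  then have l1: "length (concat Ts) > 0" by simp
  have l2: "length T > 0" using Tne by simp
  have dd: "d = length T + length (concat Ts)" using Suc.prems(4) by simp
  have lT: "length T < d" "length (concat Ts) \<le> d - 1"
    using l1 l2 dd by linarith+
  have M: "alg_mul (QQ n T) (EE n Ts) \<in> GA n m m'"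
  proof (rule GA_mul)
    show "QQ n T \<in> GA n m m'" by (rule hQ) (use Suc.prems lT in auto)
    show "EE n Ts \<in> GA n m m'"
      by (rule EE_in[of m m' "d - 1"]) (use hQ lT Suc.prems in auto)
  qed
  have key: "EE n (T # Ts) - sc (cc (Suc k)) ?Q =
      alg_mul (QQ n T) (EE n Ts) - (\<Sum>j<length Ts. sc (eps T Ts j) (?D j))"
  proof
    fix \<nu>
    have "(\<Sum>j<length Ts. sc (eps T Ts j) (?D j)) \<nu> =
        (\<Sum>j<length Ts. eps T Ts j * ?E j \<nu> - cc k * ?Q \<nu>)"
      unfolding sum_fun_apply
    proof (rule sum.cong[OF refl])
      fix j assume "j \<in> {..<length Ts}"
      then have "QQ n (concat (?U j)) \<nu> = eps T Ts j * ?Q \<nu>" using Qj by (simp add: sc_def)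
      then have "sc (eps T Ts j) (?D j) \<nu> = eps T Ts j * ?E j \<nu> - eps T Ts j * (cc k * (eps T Ts j * ?Q \<nu>))"
        by (simp add: sc_def right_diff_distrib)
      also have "eps T Ts j * (cc k * (eps T Ts j * ?Q \<nu>)) = cc k * ?Q \<nu> * (eps T Ts j * eps T Ts j)"
        by (simp only: mult_ac)
      finally show "sc (eps T Ts j) (?D j) \<nu> = eps T Ts j * ?E j \<nu> - cc k * ?Q \<nu>"
        by (simp only: eps_sq mult_1_right)
    qed
    also have "\<dots> = (\<Sum>j<length Ts. eps T Ts j * ?E j \<nu>) - of_nat (Suc k) * cc k * ?Q \<nu>"
      using Suc.prems by (simp add: sum_subtractf)
    finally have s: "(\<Sum>j<length Ts. sc (eps T Ts j) (?D j)) \<nu> =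
        (\<Sum>j<length Ts. eps T Ts j * ?E j \<nu>) - of_nat (Suc k) * cc k * ?Q \<nu>" .
    have r: "EE n (T # Ts) \<nu> = alg_mul (QQ n T) (EE n Ts) \<nu> - (\<Sum>j<length Ts. eps T Ts j * ?E j \<nu>)"
      by (subst EE_rec_diff) (simp add: sum_fun_apply sc_def)
    show "(EE n (T # Ts) - sc (cc (Suc k)) ?Q) \<nu> =
      (alg_mul (QQ n T) (EE n Ts) - (\<Sum>j<length Ts. sc (eps T Ts j) (?D j))) \<nu>"
      using s r by (simp add: sc_def cc_Suc ring_distribs)
  qed
  show ?case unfolding concat.simps key
    by (intro GA_diff M GA_sum GA_sc Dj) auto
qed

lemma injl_empty: "n < k \<Longrightarrow> injl n k = {}"
proof -
  assume "n < k"
  { fix rs assume "rs \<in> injl n k"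
    then have r: "length rs = k" "distinct rs" "set rs \<subseteq> {1..n}" by (auto simp: injl_def)
    have "card (set rs) \<le> card {1..n}" by (rule card_mono) (use r in auto)
    then have "length rs \<le> n" using distinct_card[OF r(2)] by simp
    then have False using \<open>n < k\<close> r by simp }
  then show ?thesis by blast
qed

lemma QQ_all:
  assumes "n \<ge> 1"
  shows "set L \<subseteq> atoms m m' \<Longrightarrow> QQ n L \<in> GA n m m'"
proof (induction "length L" arbitrary: L rule: less_induct)
  case less
  show ?case
  proof (cases "length L \<le> n")
    case True
    then show ?thesis using QQ_small less.prems by blast
  next
    case False
    then obtain a L' where L: "L = a # L'" using assms by (cases L) auto
    let ?Ts = "map (\<lambda>x. [x]) L'"
    have cL: "concat ([a] # ?Ts) = L" using L by (simp add: concat_map_singleton)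
    have "EE n ([a] # ?Ts) - sc (cc (length ?Ts)) (QQ n (concat ([a] # ?Ts))) \<in> GA n m m'"
      by (rule EE_mod[of m m' "length L" n ?Ts "length ?Ts" "[a]"])
         (use less.hyps less.prems cL in auto)
    then have h1: "EE n ([a] # ?Ts) - sc (cc (length ?Ts)) (QQ n L) \<in> GA n m m'"
      using cL by (simp only:)
    moreover have "EE n ([a] # ?Ts) = 0"
      using False L by (simp add: EE_def injl_empty)
    ultimately have "0 - sc (cc (length ?Ts)) (QQ n L) \<in> GA n m m'" by (simp only:)
    then have "0 - (0 - sc (cc (length ?Ts)) (QQ n L)) \<in> GA n m m'" by (rule GA_diff[OF GA_zero])
    then have "sc (cc (length ?Ts)) (QQ n L) \<in> GA n m m'" by (simp only: diff_0 minus_minus)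
    then have "sc (1 / cc (length ?Ts)) (sc (cc (length ?Ts)) (QQ n L)) \<in> GA n m m'" by (rule GA_sc)
    moreover have "1 / cc (length ?Ts) * cc (length ?Ts) = 1" using cc_nz by simp
    ultimately show ?thesis by (simp only: sc_sc sc_one)
  qed
qed

lemma EE_all:
  assumes "n \<ge> 1" "set (concat Ts) \<subseteq> atoms m m'"
  shows "EE n Ts \<in> GA n m m'"
  by (rule EE_in[of m m' "length (concat Ts)"]) (use QQ_all[OF assms(1)] assms in auto)



lemma sx_xexp:
  assumes "\<sigma> permutes S"
  shows "sx \<sigma> (xexp r T) = xexp (\<sigma> r) T"
proof
  fix p show "sx \<sigma> (xexp r T) p = xexp (\<sigma> r) T p"
    by (cases p) (auto simp: sx_def xexp_def permutes_inv_eq[OF assms])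
qed

lemma sx_plx:
  assumes "\<sigma> permutes S"
  shows "sx \<sigma> (plx rs Ts) = plx (map \<sigma> rs) Ts"
proof (induction rs Ts rule: plx.induct)
  case (1 r rs T Ts)
  then show ?case by (simp add: sx_add sx_xexp[OF assms])
qed (auto simp: sx_def)

lemma tau_plw: "map (tau \<sigma>) (plw rs Ts) = plw (map \<sigma> rs) Ts"
  by (induction rs Ts rule: plw.induct) (auto simp: tw_def tau_def)

lemma act_trm:
  assumes "\<sigma> permutes S"
  shows "alg_act \<sigma> (trm rs Ts) = trm (map \<sigma> rs) Ts"
  unfolding trm_def act_prodw[OF permutes_inj[OF assms]] sx_plx[OF assms] tau_plw ..

lemma bij_map_injl:
  assumes "\<sigma> permutes {1..n}"
  shows "bij_betw (map \<sigma>) (injl n k) (injl n k)"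
proof -
  have inj: "inj \<sigma>" by (rule permutes_inj[OF assms])
  have im: "\<sigma> ` {1..n} = {1..n}" by (rule permutes_image[OF assms])
  have sub: "map \<sigma> ` injl n k \<subseteq> injl n k"
  proof
    fix x assume "x \<in> map \<sigma> ` injl n k"
    then obtain rs where "x = map \<sigma> rs" "rs \<in> injl n k" by auto
    then show "x \<in> injl n k" using inj im
      by (auto simp: injl_def distinct_map inj_on_subset[OF inj subset_UNIV])
  qed
  have "injl n k \<subseteq> map \<sigma> ` injl n k"
  proof
    fix rs assume rs: "rs \<in> injl n k"
    have pi: "inv \<sigma> permutes {1..n}" by (rule permutes_inv[OF assms])
    have "map (inv \<sigma>) rs \<in> injl n k" using rs permutes_inj[OF pi] permutes_image[OF pi]
      by (auto simp: injl_def distinct_map inj_on_subset[OF permutes_inj[OF pi] subset_UNIV])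
    moreover have "rs = map \<sigma> (map (inv \<sigma>) rs)"
      by (simp add: map_idI permutes_inverses(1)[OF assms])
    ultimately show "rs \<in> map \<sigma> ` injl n k" by blast
  qed
  moreover have "inj_on (map \<sigma>) (injl n k)"
    using inj by (auto simp: inj_on_def)
  ultimately show ?thesis using sub by (auto simp: bij_betw_def)
qed

lemma EE_invariant:
  assumes "\<sigma> permutes {1..n}"
  shows "alg_act \<sigma> (EE n Ts) = EE n Ts"
proof -
  have "alg_act \<sigma> (EE n Ts) = (\<Sum>rs\<in>injl n (length Ts). trm (map \<sigma> rs) Ts)"
    unfolding EE_def by (simp add: alg_act_sum fin_trm act_trm[OF assms])
  also have "\<dots> = EE n Ts"
    unfolding EE_def by (rule sum.reindex_bij_betw[OF bij_map_injl[OF assms], of "\<lambda>rs. trm rs Ts"])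
  finally show ?thesis .
qed

lemma bilin:
  assumes "finite A" "finite B" "\<And>\<alpha>. fin (P \<alpha>)" "\<And>\<beta>. fin (Q \<beta>)"
  shows "alg_mul (\<Sum>\<alpha>\<in>A. sc (a \<alpha>) (P \<alpha>)) (\<Sum>\<beta>\<in>B. sc (b \<beta>) (Q \<beta>)) =
     (\<Sum>\<alpha>\<in>A. \<Sum>\<beta>\<in>B. sc (a \<alpha>) (sc (b \<beta>) (alg_mul (P \<alpha>) (Q \<beta>))))"
proof -
  have fB: "fin (\<Sum>\<beta>\<in>B. sc (b \<beta>) (Q \<beta>))" using assms by (intro fin_sum fin_sc) auto
  show ?thesis
    using assms fB
    by (simp add: alg_mul_sum_left alg_mul_sum_right alg_mul_sc_left alg_mul_sc_right fin_sc
        fin_sum sc_sum) (subst sum.swap, simp add: sc_sc mult.commute)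
qed

lemma mon_P: "finite (snd \<alpha>) \<Longrightarrow> mon \<alpha> = prodw (fst \<alpha>) (sorted_list_of_set (snd \<alpha>))"
  using mon_prodw[of "snd \<alpha>" "fst \<alpha>"] by simp

lemma act_mul_prodw:
  assumes "inj \<sigma>"
  shows "alg_act \<sigma> (alg_mul (prodw e1 w1) (prodw e2 w2)) =
         alg_mul (alg_act \<sigma> (prodw e1 w1)) (alg_act \<sigma> (prodw e2 w2))"
  unfolding prodw_mul act_prodw[OF assms] sx_add map_append ..

lemma act_mul:
  assumes "inj \<sigma>" "fin f" "fin g" "\<forall>\<alpha>\<in>supp f. finite (snd \<alpha>)" "\<forall>\<beta>\<in>supp g. finite (snd \<beta>)"
  shows "alg_act \<sigma> (alg_mul f g) = alg_mul (alg_act \<sigma> f) (alg_act \<sigma> g)"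
proof -
  define P where "P = (\<lambda>\<alpha>. prodw (fst \<alpha>) (sorted_list_of_set (snd \<alpha>)))"
  have fA: "finite (supp f)" "finite (supp g)" using assms by (auto simp: fin_def)
  have ef: "f = (\<Sum>\<alpha>\<in>supp f. sc (f \<alpha>) (P \<alpha>))"
    using fin_expand[OF assms(2)] assms(4) by (simp add: P_def mon_P cong: sum.cong)
  have eg: "g = (\<Sum>\<beta>\<in>supp g. sc (g \<beta>) (P \<beta>))"
    using fin_expand[OF assms(3)] assms(5) by (simp add: P_def mon_P cong: sum.cong)
  have fP: "\<And>\<alpha>. fin (P \<alpha>)" by (simp add: P_def fin_prodw)
  have faP: "\<And>\<alpha>. fin (alg_act \<sigma> (P \<alpha>))" using fP by (rule fin_alg_act)
  have am: "\<And>\<alpha> \<beta>. alg_act \<sigma> (alg_mul (P \<alpha>) (P \<beta>)) = alg_mul (alg_act \<sigma> (P \<alpha>)) (alg_act \<sigma> (P \<beta>))"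
    unfolding P_def by (rule act_mul_prodw[OF assms(1)])
  have actf: "alg_act \<sigma> f = (\<Sum>\<alpha>\<in>supp f. sc (f \<alpha>) (alg_act \<sigma> (P \<alpha>)))"
    by (subst ef) (simp add: alg_act_sum alg_act_sc fP fin_sc)
  have actg: "alg_act \<sigma> g = (\<Sum>\<beta>\<in>supp g. sc (g \<beta>) (alg_act \<sigma> (P \<beta>)))"
    by (subst eg) (simp add: alg_act_sum alg_act_sc fP fin_sc)
  have "alg_act \<sigma> (alg_mul f g) =
      alg_act \<sigma> (\<Sum>\<alpha>\<in>supp f. \<Sum>\<beta>\<in>supp g. sc (f \<alpha>) (sc (g \<beta>) (alg_mul (P \<alpha>) (P \<beta>))))"
    by (subst ef, subst eg, subst bilin[OF fA fP fP]) (rule refl)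
  also have "\<dots> = (\<Sum>\<alpha>\<in>supp f. \<Sum>\<beta>\<in>supp g. sc (f \<alpha>) (sc (g \<beta>) (alg_act \<sigma> (alg_mul (P \<alpha>) (P \<beta>)))))"
    by (simp add: alg_act_sum alg_act_sc fP fin_sc fin_sum fin_alg_mul)
  also have "\<dots> = alg_mul (alg_act \<sigma> f) (alg_act \<sigma> g)"
    unfolding actf actg bilin[OF fA faP faP] am ..
  finally show ?thesis .
qed



lemma carrier_iff: "f \<in> carrier_alg n m m' \<longleftrightarrow> fin f \<and> (\<forall>\<mu>\<in>supp f. valid_mono n m m' \<mu>)"
  by (simp add: carrier_alg_def fin_def)

lemma valid_finite: "valid_mono n m m' \<mu> \<Longrightarrow> finite (snd \<mu>)"
  unfolding valid_mono_def by (meson finite_SigmaI finite_atLeastAtMost finite_subset)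

lemma valid_mono_mul:
  "valid_mono n m m' \<alpha> \<Longrightarrow> valid_mono n m m' \<beta> \<Longrightarrow> valid_mono n m m' (mono_mul \<alpha> \<beta>)"
  unfolding valid_mono_def mono_mul_def by auto

lemma gen_carrier: "f \<in> GA n m m' \<Longrightarrow> f \<in> carrier_alg n m m'"
proof (induction rule: gen_subalg.induct)
  case (const c)
  have s: "supp (alg_const c) \<subseteq> {((\<lambda>_. 0), {})}" by (auto simp: supp_def alg_const_def)
  then have "finite (supp (alg_const c))" using finite_subset by blast
  moreover have "valid_mono n m m' ((\<lambda>_. 0), {})" by (simp add: valid_mono_def)
  ultimately show ?case using s by (auto simp: carrier_alg_def)
next
  case (gen g)
  then obtain S where S: "g = psum n S" "admissible_ms n m m' S" by auto
  have s: "supp (psum n S) \<subseteq> (\<lambda>r. row_mono r S) ` {1..n}"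
  proof
    fix \<mu> assume "\<mu> \<in> supp (psum n S)"
    then have "card {r \<in> {1..n}. row_mono r S = \<mu>} \<noteq> 0" by (simp add: supp_def psum_def)
    then obtain r where "r \<in> {1..n}" "row_mono r S = \<mu>" by (metis (mono_tags, lifting) Collect_empty_eq card.empty)
    then show "\<mu> \<in> (\<lambda>r. row_mono r S) ` {1..n}" by blast
  qed
  have v: "valid_mono n m m' (row_mono r S)" if "r \<in> {1..n}" for r
    using S(2) that unfolding valid_mono_def row_mono_def admissible_ms_def
    by (auto split: if_splits dest!: count_inI)
  show ?case unfolding S(1) carrier_alg_def
    using s v finite_subset[OF s] by auto
next
  case (add f g)
  then show ?case unfolding carrier_iff alg_add_eq using supp_add[of f g] by (auto intro: fin_add)
next
  case (mul f g)
  have "\<forall>\<mu>\<in>supp (alg_mul f g). valid_mono n m m' \<mu>"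
  proof
    fix \<mu> assume "\<mu> \<in> supp (alg_mul f g)"
    then have "\<mu> \<in> (\<lambda>(\<alpha>,\<beta>). mono_mul \<alpha> \<beta>) ` (supp f \<times> supp g)" using supp_alg_mul by blast
    then obtain \<alpha> \<beta> where "\<alpha> \<in> supp f" "\<beta> \<in> supp g" "\<mu> = mono_mul \<alpha> \<beta>"
      by auto
    then show "valid_mono n m m' \<mu>" using mul.IH valid_mono_mul by (auto simp: carrier_iff)
  qed
  then show ?case using mul.IH by (auto simp: carrier_iff intro: fin_alg_mul)
qed

lemma sx_zero: "sx \<sigma> (\<lambda>_. 0) = (\<lambda>_. 0)"
  by (auto simp: sx_def)

lemma act_const: "alg_act \<sigma> (alg_const c) = alg_const c"
proof -
  have "perm_sign \<sigma> {} = 1" by (simp add: perm_sign_def)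
  moreover have "mono_act \<sigma> ((\<lambda>_. 0), {}) = ((\<lambda>_. 0), {})" by (simp add: mono_act_eq sx_zero)
  ultimately show ?thesis unfolding alg_const_sc alg_act_mon by simp
qed

lemma distinct_if_count:
  assumes "\<forall>a. count (mset x) a \<le> 1"
  shows "distinct x"
  unfolding distinct_count_atmost_1
proof
  fix a
  show "count (mset x) a = (if a \<in> set x then 1 else 0)"
  proof (cases "a \<in> set x")
    case True
    then have "0 < count (mset x) a" by simp
    moreover have "count (mset x) a \<le> 1" using assms by blast
    ultimately have "count (mset x) a = 1" by linarith
    then show ?thesis using True by simp
  next
    case False
    then show ?thesis by (simp add: count_mset_0_iff)
  qed
qed

lemma psum_as_QQ:
  assumes "admissible_ms n m m' S"
  obtains c L where "psum n S = sc c (QQ n L)" "mset L = S"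
proof -
  obtain L where L: "mset L = S" using ex_mset by blast
  have "\<forall>j. count (mset (thl L)) j \<le> 1"
    using assms L by (simp add: admissible_ms_def flip: count_thl)
  then have "distinct (thl L)" by (rule distinct_if_count)
  then have "QQ n L = sc ((-1) ^ ninv (thl L)) (psum n S)" using QQ_psum L by simp
  then have "sc ((-1) ^ ninv (thl L)) (QQ n L) = psum n S"
    by (simp add: sc_sc power_mult_distrib[symmetric])
  then show ?thesis using that L by metis
qed

lemma gen_inv:
  assumes "f \<in> GA n m m'" "\<sigma> permutes {1..n}"
  shows "alg_act \<sigma> f = f"
  using assms(1)
proof (induction rule: gen_subalg.induct)
  case (const c)
  then show ?case by (rule act_const)
next
  case (gen g)
  then obtain S where S: "g = psum n S" "admissible_ms n m m' S" by auto
  obtain c L where cL: "psum n S = sc c (QQ n L)" by (rule psum_as_QQ[OF S(2)])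
  have "alg_act \<sigma> (QQ n L) = QQ n L" unfolding QQ_def by (rule EE_invariant[OF assms(2)])
  then show ?case unfolding S(1) cL alg_act_sc[OF fin_QQ] by simp
next
  case (add f g)
  show ?case unfolding alg_add_eq alg_act_add[OF gen_fin[OF add.hyps(1)] gen_fin[OF add.hyps(2)]] add.IH ..
next
  case (mul f g)
  have "\<forall>\<alpha>\<in>supp f. finite (snd \<alpha>)" "\<forall>\<alpha>\<in>supp g. finite (snd \<alpha>)"
    using gen_carrier[OF mul.hyps(1)] gen_carrier[OF mul.hyps(2)] valid_finite
    by (auto simp: carrier_iff)
  then show ?case
    using act_mul[OF permutes_inj[OF assms(2)] gen_fin[OF mul.hyps(1)] gen_fin[OF mul.hyps(2)]] mul.IH
    by simp
qed



definition ra :: "mono \<Rightarrow> nat \<Rightarrow> nat \<Rightarrow> (nat + nat) list" where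
  "ra \<mu> m r = concat (map (\<lambda>k. replicate (fst \<mu> (r, k)) (Inl k)) [1..<m+1]) @
               map Inr (sorted_list_of_set {i. (r, i) \<in> snd \<mu>})"

lemma count_rep: "count (mset (concat (map (\<lambda>k. replicate (e k) (Inl k)) ks))) (Inl k) = count (mset ks) k * e k"
  by (induction ks) auto

lemma count_map_Inr: "count (mset (map Inr ys)) (Inl k) = 0"
  by (induction ys) auto

lemma count_im_Inr: "count (image_mset Inr M) (Inl k) = 0"
  by (auto simp: count_eq_zero_iff)

lemma count_distinct: "distinct xs \<Longrightarrow> count (mset xs) x = (if x \<in> set xs then 1 else 0)"
  by (induction xs) auto

lemma thl_rep: "thl (concat (map (\<lambda>k. replicate (e k) (Inl k)) ks)) = []"
proof (induction ks)
  case (Cons a ks)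
  have "thl (replicate j (Inl a)) = []" for j by (induction j) auto
  then show ?case using Cons by (simp add: thl_append)
qed simp

lemma thl_map_Inr: "thl (map Inr ys) = ys"
  by (induction ys) auto

lemma valid_row_finite: "valid_mono n m m' \<mu> \<Longrightarrow> {i. (r, i) \<in> snd \<mu>} \<subseteq> {1..m'}"
  by (auto simp: valid_mono_def)

lemma xexp_ra:
  assumes "valid_mono n m m' \<mu>"
  shows "xexp r (ra \<mu> m r) = (\<lambda>(r', k). if r' = r then fst \<mu> (r, k) else 0)"
proof -
  have "count (mset (ra \<mu> m r)) (Inl k) = fst \<mu> (r, k)" for k
  proof -
    have "count (mset (ra \<mu> m r)) (Inl k) = count (mset [1..<m+1]) k * fst \<mu> (r, k)"
      by (simp add: ra_def count_rep count_map_Inr count_im_Inr)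
    also have "\<dots> = fst \<mu> (r, k)"
    proof (cases "k \<in> {1..m}")
      case True
      then show ?thesis by (simp add: count_distinct)
    next
      case False
      have "fst \<mu> (r, k) \<noteq> 0 \<Longrightarrow> k \<in> {1..m}" using assms by (auto simp: valid_mono_def)
      then have "fst \<mu> (r, k) = 0" using False by blast
      then show ?thesis by simp
    qed
    finally show ?thesis .
  qed
  then show ?thesis by (auto simp: xexp_def)
qed

lemma thl_ra: "thl (ra \<mu> m r) = sorted_list_of_set {i. (r, i) \<in> snd \<mu>}"
  by (simp add: ra_def thl_append thl_rep thl_map_Inr)

lemma set_ra:
  assumes "valid_mono n m m' \<mu>"
  shows "set (ra \<mu> m r) \<subseteq> atoms m m'"
proof
  fix x assume x: "x \<in> set (ra \<mu> m r)"
  have fin: "finite {i. (r, i) \<in> snd \<mu>}" using valid_row_finite[OF assms] finite_subset by blast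
  show "x \<in> atoms m m'"
    using x valid_row_finite[OF assms, of r] fin by (auto simp: ra_def atoms_def split: if_splits)
qed

lemma plx_map: "distinct rs \<Longrightarrow> plx rs (map g rs) p = (\<Sum>r\<in>set rs. xexp r (g r) p)"
  by (induction rs) auto

lemma plw_map: "plw rs (map g rs) = concat (map (\<lambda>r. tw r (g r)) rs)"
  by (induction rs) auto

lemma sorted_concat_rows:
  fixes rs :: "nat list" and g :: "nat \<Rightarrow> nat list"
  assumes "sorted_wrt (<) rs" "\<And>r. sorted_wrt (<) (g r)"
  shows "sorted_wrt (<) (concat (map (\<lambda>r. map (Pair r) (g r)) rs))"
  using assms(1)
proof (induction rs)
  case (Cons r rs)
  have s1: "sorted_wrt (<) (map (Pair r) (g r))"
    unfolding sorted_wrt_map by (rule sorted_wrt_mono_rel[OF _ assms(2)[of r]]) (auto simp: less_prod_def)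
  have cross: "\<forall>x\<in>set (map (Pair r) (g r)). \<forall>y\<in>set (concat (map (\<lambda>r. map (Pair r) (g r)) rs)). x < y"
    using Cons.prems by (auto simp: less_prod_def)
  show ?case using s1 cross Cons by (simp add: sorted_wrt_append)
qed simp

lemma trm_mon:
  assumes "valid_mono n m m' \<mu>"
  shows "trm [1..<n+1] (map (ra \<mu> m) [1..<n+1]) = mon \<mu>"
proof -
  let ?rs = "[1..<n+1]"
  let ?R = "\<lambda>r. {i. (r, i) \<in> snd \<mu>}"
  have finR: "\<And>r. finite (?R r)" using valid_row_finite[OF assms] finite_subset by blast
  have x: "plx ?rs (map (ra \<mu> m) ?rs) = fst \<mu>"
  proof
    fix p
    obtain r' k :: nat where p: "p = (r', k)" by (cases p)
    have "plx ?rs (map (ra \<mu> m) ?rs) p = (\<Sum>r\<in>{1..n}. if r' = r then fst \<mu> (r, k) else 0)"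
      unfolding plx_map[OF distinct_upt] using xexp_ra[OF assms]
      by (simp add: p atLeastLessThanSuc_atLeastAtMost)
    also have "\<dots> = (if r' \<in> {1..n} then fst \<mu> (r', k) else 0)"
      by (simp add: sum.delta)
    also have "\<dots> = fst \<mu> p"
      using assms by (auto simp: valid_mono_def p)
    finally show "plx ?rs (map (ra \<mu> m) ?rs) p = fst \<mu> p" .
  qed
  let ?W = "concat (map (\<lambda>r. map (Pair r) (sorted_list_of_set (?R r))) ?rs)"
  have w: "plw ?rs (map (ra \<mu> m) ?rs) = ?W"
    unfolding plw_map by (simp add: tw_def thl_ra)
  have s0: "sorted_wrt (<) ?rs" by (simp only: strict_sorted_iff sorted_upt distinct_upt simp_thms)
  have ss: "sorted_wrt (<) ?W"
    by (rule sorted_concat_rows[OF s0]) (simp add: strict_sorted_list_of_set)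
  then have sd: "sorted ?W" "distinct ?W" by (auto simp: strict_sorted_iff)
  have setW: "set ?W = snd \<mu>"
  proof
    show "set ?W \<subseteq> snd \<mu>" using finR by auto
    show "snd \<mu> \<subseteq> set ?W"
    proof
      fix x assume x: "x \<in> snd \<mu>"
      obtain a b where ab: "x = (a, b)" by (cases x)
      have "a \<in> {1..n}" using assms x ab by (auto simp: valid_mono_def)
      then have a: "a \<in> set ?rs" by (simp del: upt_Suc)
      have b: "x \<in> set (map (Pair a) (sorted_list_of_set (?R a)))" using finR x ab by auto
      show "x \<in> set ?W" unfolding set_concat set_map
        by (rule UnionI[OF _ b]) (use a in blast)
    qed
  qed
  show ?thesis
    unfolding trm_def x w using sd setW by (simp add: prodw_def sgnw_def ninv_sorted)
qed

lemma bij_perm_injl: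
  "bij_betw (\<lambda>\<sigma>. map \<sigma> [1..<n+1]) {\<sigma>. \<sigma> permutes {1..n}} (injl n n)"
proof -
  let ?rs0 = "[1..<n+1]"
  have set0: "set ?rs0 = {1..n}" by auto
  have inj: "inj_on (\<lambda>\<sigma>. map \<sigma> ?rs0) {\<sigma>. \<sigma> permutes {1..n}}"
  proof (rule inj_onI)
    fix \<sigma>1 \<sigma>2 assume p: "\<sigma>1 \<in> {\<sigma>. \<sigma> permutes {1..n}}" "\<sigma>2 \<in> {\<sigma>. \<sigma> permutes {1..n}}"
      and e: "map \<sigma>1 ?rs0 = map \<sigma>2 ?rs0"
    show "\<sigma>1 = \<sigma>2"
    proof
      fix x show "\<sigma>1 x = \<sigma>2 x"
      proof (cases "x \<in> {1..n}")
        case True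
        then show ?thesis using e set0 by (metis map_eq_conv)
      next
        case False
        then show ?thesis using p permutes_not_in by (metis mem_Collect_eq)
      qed
    qed
  qed
  have sub: "(\<lambda>\<sigma>. map \<sigma> ?rs0) ` {\<sigma>. \<sigma> permutes {1..n}} \<subseteq> injl n n"
  proof
    fix x assume "x \<in> (\<lambda>\<sigma>. map \<sigma> ?rs0) ` {\<sigma>. \<sigma> permutes {1..n}}"
    then obtain \<sigma> where s: "\<sigma> permutes {1..n}" "x = map \<sigma> ?rs0" by auto
    have "distinct x" using s permutes_inj[OF s(1)]
      by (simp add: distinct_map inj_on_subset[OF permutes_inj[OF s(1)] subset_UNIV])
    moreover have "set x \<subseteq> {1..n}" using s permutes_image[OF s(1)] by auto
    ultimately show "x \<in> injl n n" using s by (simp add: injl_def)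
  qed
  have sup: "injl n n \<subseteq> (\<lambda>\<sigma>. map \<sigma> ?rs0) ` {\<sigma>. \<sigma> permutes {1..n}}"
  proof
    fix rs assume "rs \<in> injl n n"
    then have rs: "length rs = n" "distinct rs" "set rs \<subseteq> {1..n}" by (auto simp: injl_def)
    have "card (set rs) = card {1..n}" using rs distinct_card by fastforce
    then have setrs: "set rs = {1..n}" using rs(3) by (simp add: card_subset_eq)
    define \<sigma> where "\<sigma> = (\<lambda>x. if x \<in> {1..n} then rs ! (x - 1) else x)"
    have "bij_betw \<sigma> {1..n} {1..n}"
    proof (rule bij_betw_imageI)
      show "inj_on \<sigma> {1..n}"
      proof (rule inj_onI)
        fix x y assume "x \<in> {1..n}" "y \<in> {1..n}" "\<sigma> x = \<sigma> y"
        then have "rs ! (x - 1) = rs ! (y - 1)" "x - 1 < length rs" "y - 1 < length rs"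
          using rs by (auto simp: \<sigma>_def)
        then have "x - 1 = y - 1" using rs(2) nth_eq_iff_index_eq by blast
        then show "x = y" using \<open>x \<in> {1..n}\<close> \<open>y \<in> {1..n}\<close> by auto
      qed
      have "\<sigma> ` {1..n} = (\<lambda>j. rs ! j) ` {..<n}"
      proof (rule set_eqI)
        fix z show "z \<in> \<sigma> ` {1..n} \<longleftrightarrow> z \<in> (\<lambda>j. rs ! j) ` {..<n}"
        proof
          assume "z \<in> \<sigma> ` {1..n}"
          then obtain x where "x \<in> {1..n}" "z = rs ! (x - 1)" by (auto simp: \<sigma>_def)
          then show "z \<in> (\<lambda>j. rs ! j) ` {..<n}" by (intro image_eqI[of _ _ "x - 1"]) auto
        next
          assume "z \<in> (\<lambda>j. rs ! j) ` {..<n}"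
          then obtain j where "j < n" "z = rs ! j" by auto
          then show "z \<in> \<sigma> ` {1..n}" by (intro image_eqI[of _ _ "j + 1"]) (auto simp: \<sigma>_def)
        qed
      qed
      also have "\<dots> = set rs" using rs(1) by (auto simp: set_conv_nth)
      finally show "\<sigma> ` {1..n} = {1..n}" using setrs by simp
    qed
    then have perm: "\<sigma> permutes {1..n}"
    proof (rule bij_imp_permutes)
      fix x :: nat assume "x \<notin> {1..n}"
      then show "\<sigma> x = x" unfolding \<sigma>_def by (simp only: if_False)
    qed
    have "map \<sigma> ?rs0 = rs"
    proof (rule nth_equalityI)
      show "length (map \<sigma> ?rs0) = length rs" using rs by (simp del: upt_Suc)
      fix i assume "i < length (map \<sigma> ?rs0)"
      then have i: "i < n" by (simp del: upt_Suc)
      then have "map \<sigma> ?rs0 ! i = \<sigma> (1 + i)" by (simp del: upt_Suc)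
      also have "\<dots> = rs ! i" using i by (simp add: \<sigma>_def)
      finally show "map \<sigma> ?rs0 ! i = rs ! i" .
    qed
    then show "rs \<in> (\<lambda>\<sigma>. map \<sigma> ?rs0) ` {\<sigma>. \<sigma> permutes {1..n}}" using perm by blast
  qed
  show ?thesis using inj sub sup by (auto simp: bij_betw_def)
qed

lemma orbit_in_GA:
  assumes "n \<ge> 1" "valid_mono n m m' \<mu>"
  shows "(\<Sum>\<sigma>\<in>{\<sigma>. \<sigma> permutes {1..n}}. alg_act \<sigma> (mon \<mu>)) \<in> GA n m m'"
proof -
  let ?rs0 = "[1..<n+1]"
  let ?Ts = "map (ra \<mu> m) ?rs0"
  have "(\<Sum>\<sigma>\<in>{\<sigma>. \<sigma> permutes {1..n}}. alg_act \<sigma> (mon \<mu>)) =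
        (\<Sum>\<sigma>\<in>{\<sigma>. \<sigma> permutes {1..n}}. trm (map \<sigma> ?rs0) ?Ts)"
    unfolding trm_mon[OF assms(2), symmetric]
    by (intro sum.cong refl) (simp add: act_trm)
  also have "\<dots> = (\<Sum>rs\<in>injl n n. trm rs ?Ts)"
    by (rule sum.reindex_bij_betw[OF bij_perm_injl, of "\<lambda>rs. trm rs ?Ts"])
  also have "\<dots> = EE n ?Ts" by (simp add: EE_def del: upt_Suc)
  finally have e: "(\<Sum>\<sigma>\<in>{\<sigma>. \<sigma> permutes {1..n}}. alg_act \<sigma> (mon \<mu>)) = EE n ?Ts" .
  have "set (concat ?Ts) \<subseteq> atoms m m'" using set_ra[OF assms(2)] by auto
  then show ?thesis unfolding e by (rule EE_all[OF assms(1)])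
qed

lemma invariant_in_GA:
  assumes "n \<ge> 1" "f \<in> carrier_alg n m m'" "\<forall>\<sigma>. \<sigma> permutes {1..n} \<longrightarrow> alg_act \<sigma> f = f"
  shows "f \<in> GA n m m'"
proof -
  let ?P = "{\<sigma>. \<sigma> permutes {1..n}}"
  have fin: "fin f" and val: "\<forall>\<mu>\<in>supp f. valid_mono n m m' \<mu>" using assms(2) by (auto simp: carrier_iff)
  have fP: "finite ?P" by (simp add: finite_permutations)
  have cP: "card ?P = fact n" using card_permutations[of "{1..n}" n] by simp
  have "(\<Sum>\<sigma>\<in>?P. alg_act \<sigma> f) = (\<Sum>\<sigma>\<in>?P. f)" using assms(3) by simp
  also have "\<dots> = sc (fact n) f"
  proof
    fix \<nu> show "(\<Sum>\<sigma>\<in>?P. f) \<nu> = sc (fact n) f \<nu>"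
      unfolding sum_fun_apply sc_def using cP by simp
  qed
  finally have s1: "(\<Sum>\<sigma>\<in>?P. alg_act \<sigma> f) = sc (fact n) f" .
  have "(\<Sum>\<sigma>\<in>?P. alg_act \<sigma> f) = (\<Sum>\<sigma>\<in>?P. \<Sum>\<mu>\<in>supp f. sc (f \<mu>) (alg_act \<sigma> (mon \<mu>)))"
  proof -
    have h: "alg_act \<sigma> (\<Sum>\<alpha>\<in>supp f. sc (f \<alpha>) (mon \<alpha>)) = (\<Sum>\<alpha>\<in>supp f. sc (f \<alpha>) (alg_act \<sigma> (mon \<alpha>)))" for \<sigma>
    proof -
      have "alg_act \<sigma> (\<Sum>\<alpha>\<in>supp f. sc (f \<alpha>) (mon \<alpha>)) = (\<Sum>\<alpha>\<in>supp f. alg_act \<sigma> (sc (f \<alpha>) (mon \<alpha>)))"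
        by (rule alg_act_sum) (rule fin_sc, rule fin_mon)
      also have "\<dots> = (\<Sum>\<alpha>\<in>supp f. sc (f \<alpha>) (alg_act \<sigma> (mon \<alpha>)))"
        by (simp only: alg_act_sc[OF fin_mon])
      finally show ?thesis .
    qed
    show ?thesis by (subst fin_expand[OF fin]) (simp only: h)
  qed
  also have "\<dots> = (\<Sum>\<mu>\<in>supp f. sc (f \<mu>) (\<Sum>\<sigma>\<in>?P. alg_act \<sigma> (mon \<mu>)))"
    by (subst sum.swap) (simp add: sc_sum)
  finally have s2: "sc (fact n) f = (\<Sum>\<mu>\<in>supp f. sc (f \<mu>) (\<Sum>\<sigma>\<in>?P. alg_act \<sigma> (mon \<mu>)))"
    using s1 by simp
  have "sc (fact n) f \<in> GA n m m'"
    unfolding s2 by (intro GA_sum GA_sc orbit_in_GA[OF assms(1)]) (use val in auto)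
  then have "sc (1 / fact n) (sc (fact n) f) \<in> GA n m m'" by (rule GA_sc)
  moreover have "(1 / fact n) * (fact n :: complex) = 1" by simp
  ultimately show ?thesis by (simp only: sc_sc sc_one)
qed

theorem theorem4p3:
  fixes n m m' :: nat
  assumes "n \<ge> 1"
  shows "{f \<in> carrier_alg n m m'. \<forall>\<sigma>. \<sigma> permutes {1..n} \<longrightarrow> alg_act \<sigma> f = f}
         = gen_subalg {psum n S | S. admissible_ms n m m' S}"
proof
  show "{f \<in> carrier_alg n m m'. \<forall>\<sigma>. \<sigma> permutes {1..n} \<longrightarrow> alg_act \<sigma> f = f}
         \<subseteq> gen_subalg {psum n S | S. admissible_ms n m m' S}"
    using invariant_in_GA[OF assms] by blast
  show "gen_subalg {psum n S | S. admissible_ms n m m' S}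
      \<subseteq> {f \<in> carrier_alg n m m'. \<forall>\<sigma>. \<sigma> permutes {1..n} \<longrightarrow> alg_act \<sigma> f = f}"
    using gen_carrier gen_inv by blast
qed

end
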